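(* Let $\mathcal{G}(t)$ be a matrix-weighted switching network satisfying Assumption 1 (described in the context), with matrix-valued Laplacian $L^k$ on $[t_k,t_{k+1})$ and $\Delta t_k=t_{k+1}-t_k$. For integers $0\le k'<k''$, let $$\Phi(t_{k''},t_{k'})=e^{-L^{k''-1}\Delta t_{k''-1}}\cdots e^{-L^{k'}\Delta t_{k'}},$$ and let $\widetilde{L}_{[t_{k'},t_{k''})}=\frac{1}{t_{k''}-t_{k'}}\int_{t_{k'}}^{t_{k''}}L(t)dt$. Let $m=\dim\mathrm{null}(\widetilde{L}_{[t_{k'},t_{k''})})$ with $m<dn$, and let $\mu_1\ge\mu_2\ge\cdots\ge\mu_{dn}$ be the eigenvalues of $\Phi(t_{k''},t_{k'})^\top\Phi(t_{k''},t_{k'})$ in nonincreasing order (so that $\mu_1=\dots=\mu_m=1$). Then $$\mu_{m+1}\big(\Phi(t_{k''},t_{k'})^\top\Phi(t_{k''},t_{k'})\big)<1.$$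
   Context: A matrix-weighted switching network $\mathcal{G}(t)=(\mathcal{V},\mathcal{E}(t),A(t))$ has node set $\mathcal{V}=\{1,\dots,n\}$, $n>1$; each edge $(i,j)\in\mathcal{E}(t)$ carries a symmetric weight $A_{ij}(t)\in\mathbb{R}^{d\times d}$ which is either positive (semi-)definite or negative (semi-)definite, with $A_{ij}=A_{ji}$, $A_{ii}=0$, $A_{ij}(t)=0$ if $(i,j)\notin\mathcal{E}(t)$; standing assumption: for each pair $(i,j)$ the weight $A_{ij}(t)$ has the same sign type for all $t$. Set $|A_{ij}|=A_{ij}$ if $A_{ij}\succeq0$ and $-A_{ij}$ if $A_{ij}\preceq0$. With $A=[A_{ij}]\in\mathbb{R}^{dn\times dn}$ and $D=\mathrm{diag}(D_1,\dots,D_n)$, $D_i=\sum_{j:(i,j)\in\mathcal{E}}|A_{ij}|$, the matrix-valued Laplacian is $L=D-A$. Assumption 1: there is a sequence $\{t_k\}_{k\in\mathbb{N}}$ with $t_0=0$, $t_k\to\infty$, $t_{k+1}-t_k\ge\alpha>0$, and $\mathcal{G}(t)$ is constant on each $[t_k,t_{k+1})$. *)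

theory Defs
  imports "HOL-Analysis.Analysis" "Jordan_Normal_Form.Char_Poly" "Jordan_Normal_Form.Matrix_Kernel"
begin

definition psd_mat :: "nat \<Rightarrow> real mat \<Rightarrow> bool" where
  "psd_mat d B \<longleftrightarrow> B \<in> carrier_mat d d \<and> (\<forall>x \<in> carrier_vec d. 0 \<le> x \<bullet> (B *\<^sub>v x))"

definition nsd_mat :: "nat \<Rightarrow> real mat \<Rightarrow> bool" where
  "nsd_mat d B \<longleftrightarrow> psd_mat d (- B)"

definition abs_w :: "nat \<Rightarrow> real mat \<Rightarrow> real mat" where
  "abs_w d B = (if psd_mat d B then B else - B)"

text \<open>Row index p corresponds to node p div d, component p mod d.
  D_i = sum of |A_ij| over j (non-edges have A_ij = 0, so |A_ij| = 0).\<close>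
definition mw_laplacian :: "nat \<Rightarrow> nat \<Rightarrow> (nat \<Rightarrow> nat \<Rightarrow> real mat) \<Rightarrow> real mat" where
  "mw_laplacian d n W = mat (d * n) (d * n) (\<lambda>(p, q).
     (if p div d = q div d then (\<Sum>l<n. abs_w d (W (p div d) l) $$ (p mod d, q mod d)) else 0)
     - W (p div d) (q div d) $$ (p mod d, q mod d))"

definition mat_exp :: "real mat \<Rightarrow> real mat" where
  "mat_exp B = mat (dim_row B) (dim_col B) (\<lambda>(i, j). \<Sum>k. (B ^\<^sub>m k) $$ (i, j) / fact k)"

fun trans_mat :: "nat \<Rightarrow> (nat \<Rightarrow> real mat) \<Rightarrow> (nat \<Rightarrow> real) \<Rightarrow> nat \<Rightarrow> nat \<Rightarrow> real mat" where
  "trans_mat N Lk tk k0 0 = 1\<^sub>m N"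
| "trans_mat N Lk tk k0 (Suc j) =
     mat_exp (- ((tk (Suc (k0 + j)) - tk (k0 + j)) \<cdot>\<^sub>m Lk (k0 + j))) * trans_mat N Lk tk k0 j"

text \<open>Eigenvalues (with algebraic multiplicity, as roots of the characteristic
  polynomial) in nonincreasing order; index 0 is mu_1.\<close>
definition eigs_desc :: "real mat \<Rightarrow> real list" where
  "eigs_desc B = rev (sorted_list_of_multiset (proots (char_poly B)))"

end

theory Submission
  imports Defs "HOL-Computational_Algebra.Fundamental_Theorem_Algebra"
begin

lemma mult_mat_vec_index_sum:
  assumes "A \<in> carrier_mat n m" "v \<in> carrier_vec m" "i < n"
  shows "(A *\<^sub>v v) $ i = (\<Sum>j\<in>{0..<m}. A $$ (i,j) * v $ j)"
  using assms by (auto simp: scalar_prod_def)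

lemma real_eigen:
  fixes A :: "real mat"
  assumes A: "A \<in> carrier_mat n n" and sym: "A\<^sup>T = A" and n: "n > 0"
  shows "\<exists>e v. v \<in> carrier_vec n \<and> v \<noteq> 0\<^sub>v n \<and> A *\<^sub>v v = e \<cdot>\<^sub>v v"
proof -
  let ?p = "char_poly A"
  define Ac where "Ac = map_mat complex_of_real A"
  have Ac: "Ac \<in> carrier_mat n n" using A by (simp add: Ac_def)
  have cp: "char_poly Ac = map_poly complex_of_real ?p"
    unfolding Ac_def by (rule of_real_hom.char_poly_hom[OF A])
  have deg: "degree ?p = n" using degree_monic_char_poly[OF A] by simp
  have "\<not> constant (poly (map_poly complex_of_real ?p))"
    using deg n by (simp add: constant_degree)
  then obtain z where z: "poly (char_poly Ac) z = 0" using fundamental_theorem_of_algebra cp by metis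
  then have "eigenvalue Ac z" using eigenvalue_root_char_poly[OF Ac] by simp
  then obtain w where w: "w \<in> carrier_vec n" "w \<noteq> 0\<^sub>v n" "Ac *\<^sub>v w = z \<cdot>\<^sub>v w"
    unfolding eigenvalue_def eigenvector_def using Ac by auto
  have Aw: "(\<Sum>j\<in>{0..<n}. complex_of_real (A $$ (i,j)) * w $ j) = z * w $ i" if "i < n" for i
  proof -
    have "(Ac *\<^sub>v w) $ i = z * w $ i" using w that by simp
    moreover have "(Ac *\<^sub>v w) $ i = (\<Sum>j\<in>{0..<n}. Ac $$ (i,j) * w $ j)"
      using mult_mat_vec_index_sum[OF Ac w(1) that] .
    ultimately show ?thesis using that A by (simp add: Ac_def)
  qed
  define S where "S = (\<Sum>i\<in>{0..<n}. cnj (w $ i) * (\<Sum>j\<in>{0..<n}. complex_of_real (A $$ (i,j)) * w $ j))"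
  define r where "r = (\<Sum>i\<in>{0..<n}. cnj (w $ i) * w $ i)"
  have "S = (\<Sum>i\<in>{0..<n}. cnj (w $ i) * (z * w $ i))" unfolding S_def
    by (rule sum.cong) (auto simp: Aw)
  then have S1: "S = z * r" unfolding r_def by (simp add: sum_distrib_left mult_ac)
  have symA: "A $$ (i,j) = A $$ (j,i)" if "i < n" "j < n" for i j
    using sym that A by (metis carrier_matD index_transpose_mat(1))
  have "cnj S = (\<Sum>i\<in>{0..<n}. \<Sum>j\<in>{0..<n}. w $ i * complex_of_real (A $$ (i,j)) * cnj (w $ j))"
    unfolding S_def by (simp add: sum_distrib_left mult_ac)
  also have "\<dots> = (\<Sum>j\<in>{0..<n}. \<Sum>i\<in>{0..<n}. w $ i * complex_of_real (A $$ (i,j)) * cnj (w $ j))"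
    by (rule sum.swap)
  also have "\<dots> = S" unfolding S_def
    by (auto simp: sum_distrib_left mult_ac symA intro!: sum.cong)
  finally have S2: "cnj S = S" .
  have rreal: "r = complex_of_real (\<Sum>i\<in>{0..<n}. (cmod (w $ i))^2)"
    unfolding r_def of_real_sum
    by (rule sum.cong) (auto simp: complex_norm_square[symmetric] mult.commute)
  obtain i where i: "i < n" "w $ i \<noteq> 0" using w by (metis carrier_vecD eq_vecI index_zero_vec)
  have "(\<Sum>i\<in>{0..<n}. (cmod (w $ i))^2) > 0"
  proof -
    have "(cmod (w $ i))^2 \<le> (\<Sum>i\<in>{0..<n}. (cmod (w $ i))^2)"
      using i by (intro member_le_sum) auto
    moreover have "(cmod (w $ i))^2 > 0" using i by simp
    ultimately show ?thesis by linarith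
  qed
  then have r0: "r \<noteq> 0" using rreal by (metis less_irrefl of_real_eq_0_iff)
  have "cnj z * r = z * r" using S1 S2 rreal by (metis complex_cnj_complex_of_real complex_cnj_mult)
  then have zc: "cnj z = z" using r0 by simp
  define e where "e = Re z"
  have ze: "z = complex_of_real e"
  proof -
    have "Im z = 0" using zc by (simp add: complex_eq_iff)
    then show ?thesis unfolding e_def by (simp add: complex_eq_iff)
  qed
  have "poly ?p e = 0" using z ze cp by simp
  then have "eigenvalue A e" using eigenvalue_root_char_poly[OF A] by simp
  then show ?thesis unfolding eigenvalue_def eigenvector_def using A by auto
qed

definition orth_mat :: "nat \<Rightarrow> real mat \<Rightarrow> bool" where
  "orth_mat n U \<longleftrightarrow> U \<in> carrier_mat n n \<and> U\<^sup>T * U = 1\<^sub>m n \<and> U * U\<^sup>T = 1\<^sub>m n"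

definition diagm :: "real list \<Rightarrow> real mat" where
  "diagm es = mat (length es) (length es) (\<lambda>(i,j). if i = j then es ! i else 0)"

lemma diagm_carrier[simp]: "diagm es \<in> carrier_mat (length es) (length es)"
  by (simp add: diagm_def)

lemma dim_diagm[simp]: "dim_row (diagm es) = length es" "dim_col (diagm es) = length es"
  by (simp_all add: diagm_def)

lemma orth_matI:
  assumes "U \<in> carrier_mat n n" "U\<^sup>T * U = 1\<^sub>m n"
  shows "orth_mat n U"
  using assms mat_mult_left_right_inverse[of "U\<^sup>T" n U] unfolding orth_mat_def
  by (metis mat_mult_left_right_inverse transpose_carrier_mat)

lemma orth_mat_mult:
  assumes "orth_mat n A" "orth_mat n B"
  shows "orth_mat n (A * B)"
proof (rule orth_matI)
  have A: "A \<in> carrier_mat n n" and B: "B \<in> carrier_mat n n" using assms orth_mat_def by auto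
  show "A * B \<in> carrier_mat n n" using A B by simp
  have "(A * B)\<^sup>T * (A * B) = B\<^sup>T * (A\<^sup>T * A) * B"
    using A B by (simp add: transpose_mult assoc_mult_mat[of _ n n _ n _ n])
  also have "\<dots> = 1\<^sub>m n" using assms B unfolding orth_mat_def by simp
  finally show "(A * B)\<^sup>T * (A * B) = 1\<^sub>m n" .
qed

lemma UDUt_index:
  assumes U: "U \<in> carrier_mat n n" and es: "length es = n" and ij: "i < n" "j < n"
  shows "(U * diagm es * U\<^sup>T) $$ (i,j) = (\<Sum>k\<in>{0..<n}. U $$ (i,k) * es ! k * U $$ (j,k))"
proof -
  have UD: "(U * diagm es) $$ (i,k) = U $$ (i,k) * es ! k" if "k < n" for k
    using U es ij that by (simp add: scalar_prod_def diagm_def if_distrib cong: if_cong)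
  have "(U * diagm es * U\<^sup>T) $$ (i,j) = (\<Sum>k\<in>{0..<n}. (U * diagm es) $$ (i,k) * U $$ (j,k))"
    using U es ij by (auto simp: scalar_prod_def intro!: sum.cong)
  also have "\<dots> = (\<Sum>k\<in>{0..<n}. U $$ (i,k) * es ! k * U $$ (j,k))"
    by (rule sum.cong) (auto simp: UD)
  finally show ?thesis .
qed

lemma householder:
  fixes v :: "real vec"
  assumes v: "v \<in> carrier_vec n" and n: "n > 0" and nv: "v \<bullet> v = 1"
  shows "\<exists>H. orth_mat n H \<and> (\<forall>i<n. H $$ (i,0) = v $ i)"
proof (cases "v = unit_vec n 0")
  case True
  then show ?thesis using n by (intro exI[of _ "1\<^sub>m n"]) (auto simp: orth_mat_def)
next
  case False
  define w where "w = v - unit_vec n 0"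
  have w: "w \<in> carrier_vec n" using v by (simp add: w_def)
  have wi: "w $ i = v $ i - (if i = 0 then 1 else 0)" if "i < n" for i
    using that v by (simp add: w_def)
  define c where "c = w \<bullet> w"
  have csum: "c = (\<Sum>k\<in>{0..<n}. (w $ k)^2)" using w by (simp add: c_def scalar_prod_def power2_eq_square)
  have "w \<noteq> 0\<^sub>v n"
  proof
    assume w0: "w = 0\<^sub>v n"
    have "v $ i = unit_vec n 0 $ i" if "i < n" for i
      using wi[OF that] that w0 by (simp add: unit_vec_def)
    then have "v = unit_vec n 0" using v by (intro eq_vecI) auto
    with False show False by simp
  qed
  then obtain i where i: "i < n" "w $ i \<noteq> 0" using w by (metis carrier_vecD eq_vecI index_zero_vec)
  have cpos: "c > 0"
  proof -
    have "(w $ i)^2 \<le> c" unfolding csum using i by (intro member_le_sum) auto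
    moreover have "(w $ i)^2 > 0" using i by simp
    ultimately show ?thesis by linarith
  qed
  have vv: "(\<Sum>k\<in>{0..<n}. (v $ k)^2) = 1" using nv v by (simp add: scalar_prod_def power2_eq_square)
  have "c = (\<Sum>k\<in>{0..<n}. (v $ k)^2 - 2 * (if k = 0 then v $ k else 0) + (if k = 0 then 1 else 0))"
    unfolding csum by (rule sum.cong) (auto simp: wi power2_eq_square algebra_simps)
  also have "\<dots> = 2 - 2 * v $ 0"
    using n vv by (simp add: sum.distrib sum_subtractf sum_distrib_left[symmetric])
  finally have cv: "c = 2 - 2 * v $ 0" .
  have w0: "w $ 0 = v $ 0 - 1" using wi n by simp
  define H where "H = mat n n (\<lambda>(i,j). (if i = j then 1 else 0) - 2 / c * (w $ i * w $ j))"
  have H: "H \<in> carrier_mat n n" by (simp add: H_def)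
  have Ht: "H\<^sup>T = H" by (rule eq_matI) (auto simp: H_def mult.commute)
  have HH: "H * H = 1\<^sub>m n"
  proof (rule eq_matI)
    fix i j assume ij: "i < dim_row (1\<^sub>m n)" "j < dim_col (1\<^sub>m n)"
    then have ij: "i < n" "j < n" by auto
    define a where "a = 2 / c"
    define K where "K = 4 / (c * c) * (w $ i * w $ j)"
    have "(H * H) $$ (i,j) = (\<Sum>k\<in>{0..<n}. ((if i = k then 1 else 0) - a * (w $ i * w $ k)) *
         ((if k = j then 1 else 0) - a * (w $ k * w $ j)))"
      using ij by (simp add: H_def scalar_prod_def a_def)
    also have "\<dots> = (\<Sum>k\<in>{0..<n}. (if i = k then (if k = j then 1 else 0) else 0)
        - (if i = k then a * (w $ k * w $ j) else 0)
        - (if k = j then a * (w $ i * w $ k) else 0))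
        + (\<Sum>k\<in>{0..<n}. K * (w $ k)^2)"
      unfolding sum.distrib[symmetric]
      by (rule sum.cong) (auto simp: algebra_simps power2_eq_square a_def K_def)
    also have "(\<Sum>k\<in>{0..<n}. K * (w $ k)^2) = K * c" by (simp add: csum sum_distrib_left)
    also have "(\<Sum>k\<in>{0..<n}. (if i = k then (if k = j then 1 else 0) else 0)
        - (if i = k then a * (w $ k * w $ j) else 0)
        - (if k = j then a * (w $ i * w $ k) else 0)) =
        (if i = j then 1 else 0) - a * (w $ i * w $ j) - a * (w $ i * w $ j)"
      using ij by (simp add: sum_subtractf)
    also have "(if i = j then 1 else 0) - a * (w $ i * w $ j) - a * (w $ i * w $ j) + K * c
       = (if i = j then 1 else (0::real))" using cpos by (simp add: field_simps a_def K_def)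
    finally show "(H * H) $$ (i,j) = 1\<^sub>m n $$ (i,j)" using ij by simp
  qed (use H in auto)
  have "H $$ (i,0) = v $ i" if "i < n" for i
  proof -
    have "H $$ (i,0) = (if i = 0 then 1 else 0) - 2 / c * (w $ i * w $ 0)" using that n by (simp add: H_def)
    also have "2 / c * w $ 0 = -1" using cv w0 cpos by (simp add: field_simps)
    then have "(if i = 0 then 1 else 0) - 2 / c * (w $ i * w $ 0) = (if i = 0 then 1 else 0) + w $ i"
      by (metis (no_types, lifting) diff_minus_eq_add mult.left_commute mult_minus1_right)
    also have "\<dots> = v $ i" using wi[OF that] by simp
    finally show ?thesis .
  qed
  moreover have "orth_mat n H" using H HH Ht by (intro orth_matI) auto
  ultimately show ?thesis by blast
qed

lemma vec_sq_pos:
  fixes v :: "real vec"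
  assumes v: "v \<in> carrier_vec n" and v0: "v \<noteq> 0\<^sub>v n"
  shows "v \<bullet> v > 0"
proof -
  obtain i where i: "i < n" "v $ i \<noteq> 0" using v v0 by (metis carrier_vecD eq_vecI index_zero_vec)
  have s: "v \<bullet> v = (\<Sum>k\<in>{0..<n}. (v $ k)^2)" using v by (simp add: scalar_prod_def power2_eq_square)
  have "(v $ i)^2 \<le> (\<Sum>k\<in>{0..<n}. (v $ k)^2)" using i by (intro member_le_sum) auto
  moreover have "(v $ i)^2 > 0" using i by simp
  ultimately show ?thesis using s by linarith
qed

lemma sum_Suc_split: "(\<Sum>k\<in>{0..<Suc n}. f k) = f 0 + (\<Sum>k\<in>{0..<n}. f (Suc k))"
  by (simp add: sum.atLeast0_lessThan_Suc_shift del: sum.op_ivl_Suc)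

theorem spectral:
  fixes A :: "real mat"
  assumes "A \<in> carrier_mat n n" "A\<^sup>T = A"
  shows "\<exists>U es. orth_mat n U \<and> length es = n \<and> A = U * diagm es * U\<^sup>T"
  using assms
proof (induction n arbitrary: A)
  case 0
  then show ?case
    by (intro exI[of _ "1\<^sub>m 0"] exI[of _ "[]"]) (auto simp: orth_mat_def intro!: eq_matI)
next
  case (Suc n)
  have A: "A \<in> carrier_mat (Suc n) (Suc n)" and sym: "A\<^sup>T = A" using Suc.prems by auto
  obtain e v0 where v0: "v0 \<in> carrier_vec (Suc n)" "v0 \<noteq> 0\<^sub>v (Suc n)" "A *\<^sub>v v0 = e \<cdot>\<^sub>v v0"
    using real_eigen[OF A sym] by auto
  define s where "s = 1 / sqrt (v0 \<bullet> v0)"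
  define v where "v = s \<cdot>\<^sub>v v0"
  have v: "v \<in> carrier_vec (Suc n)" using v0 by (simp add: v_def)
  have pos: "v0 \<bullet> v0 > 0" using vec_sq_pos v0 by blast
  have "v \<bullet> v = s * s * (v0 \<bullet> v0)" unfolding v_def using v0 by simp
  also have "\<dots> = 1" using pos unfolding s_def by (simp add: field_simps)
  finally have vv: "v \<bullet> v = 1" .
  have Av: "A *\<^sub>v v = e \<cdot>\<^sub>v v" unfolding v_def
    using mult_mat_vec[OF A v0(1)] v0 by (simp add: smult_smult_assoc mult.commute)
  obtain H where H: "orth_mat (Suc n) H" and Hv: "\<And>i. i < Suc n \<Longrightarrow> H $$ (i,0) = v $ i"
    using householder[OF v _ vv] by auto
  have Hc: "H \<in> carrier_mat (Suc n) (Suc n)" and HtH: "H\<^sup>T * H = 1\<^sub>m (Suc n)" and HHt: "H * H\<^sup>T = 1\<^sub>m (Suc n)"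
    using H orth_mat_def by auto
  have cH: "col H 0 = v" using Hc v Hv by (intro eq_vecI) auto
  define A' where "A' = H\<^sup>T * A * H"
  have A': "A' \<in> carrier_mat (Suc n) (Suc n)" using Hc A by (simp add: A'_def)
  have symA': "A'\<^sup>T = A'"
  proof -
    have HtA: "H\<^sup>T * A \<in> carrier_mat (Suc n) (Suc n)" using Hc A by simp
    have "A'\<^sup>T = H\<^sup>T * (H\<^sup>T * A)\<^sup>T" unfolding A'_def using transpose_mult[OF HtA Hc] by simp
    also have "(H\<^sup>T * A)\<^sup>T = A\<^sup>T * H" using transpose_mult[of "H\<^sup>T" "Suc n" "Suc n" A "Suc n"] Hc A by simp
    finally show ?thesis unfolding A'_def using sym Hc A by (simp add: assoc_mult_mat[of _ "Suc n" "Suc n" _ "Suc n" _ "Suc n"])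
  qed
  have "col A' 0 = (H\<^sup>T * A) *\<^sub>v col H 0" unfolding A'_def
    by (rule col_mult2[of _ "Suc n" "Suc n" _ "Suc n"]) (use Hc A in auto)
  also have "\<dots> = H\<^sup>T *\<^sub>v (A *\<^sub>v v)" using cH Hc A v by simp
  also have "\<dots> = e \<cdot>\<^sub>v (H\<^sup>T *\<^sub>v v)" using Av Hc v by (simp add: mult_mat_vec)
  also have "H\<^sup>T *\<^sub>v v = col (H\<^sup>T * H) 0"
    using col_mult2[of "H\<^sup>T" "Suc n" "Suc n" H "Suc n" 0] cH Hc by simp
  also have "\<dots> = unit_vec (Suc n) 0" using HtH by simp
  finally have colA': "col A' 0 = e \<cdot>\<^sub>v unit_vec (Suc n) 0" .
  have A'i0: "A' $$ (i,0) = (if i = 0 then e else 0)" if "i < Suc n" for i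
  proof -
    have "A' $$ (i,0) = col A' 0 $ i" using A' that by simp
    then show ?thesis using colA' that by (simp add: unit_vec_def)
  qed
  have A'sym: "A' $$ (i,j) = A' $$ (j,i)" if "i < Suc n" "j < Suc n" for i j
    using symA' that A' by (metis carrier_matD index_transpose_mat(1))
  define A3 where "A3 = mat n n (\<lambda>(i,j). A' $$ (Suc i, Suc j))"
  have A3: "A3 \<in> carrier_mat n n" by (simp add: A3_def)
  have symA3: "A3\<^sup>T = A3" by (rule eq_matI) (auto simp: A3_def A'sym)
  obtain U3 es3 where U3: "orth_mat n U3" and es3: "length es3 = n"
    and A3eq: "A3 = U3 * diagm es3 * U3\<^sup>T"
    using Suc.IH[OF A3 symA3] by auto
  have U3c: "U3 \<in> carrier_mat n n" and U3o: "U3\<^sup>T * U3 = 1\<^sub>m n" using U3 orth_mat_def by auto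
  have U3sum: "(\<Sum>k\<in>{0..<n}. U3 $$ (k,i) * U3 $$ (k,j)) = (if i = j then 1 else 0)"
    if "i < n" "j < n" for i j
  proof -
    have "(U3\<^sup>T * U3) $$ (i,j) = (\<Sum>k\<in>{0..<n}. U3 $$ (k,i) * U3 $$ (k,j))"
      using that U3c by (simp add: scalar_prod_def)
    then show ?thesis using U3o that by simp
  qed
  define U' where "U' = mat (Suc n) (Suc n) (\<lambda>(i,j). if i = 0 then (if j = 0 then 1 else 0)
      else if j = 0 then 0 else U3 $$ (i - 1, j - 1))"
  have U'c: "U' \<in> carrier_mat (Suc n) (Suc n)" by (simp add: U'_def)
  have "U'\<^sup>T * U' = 1\<^sub>m (Suc n)"
  proof (rule eq_matI)
    fix i j assume "i < dim_row (1\<^sub>m (Suc n))" "j < dim_col (1\<^sub>m (Suc n))"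
    then have ij: "i < Suc n" "j < Suc n" by auto
    have "(U'\<^sup>T * U') $$ (i,j) = (\<Sum>k\<in>{0..<Suc n}. U' $$ (k,i) * U' $$ (k,j))"
      using ij U'c by (simp add: scalar_prod_def)
    also have "\<dots> = U' $$ (0,i) * U' $$ (0,j) + (\<Sum>k\<in>{0..<n}. U' $$ (Suc k,i) * U' $$ (Suc k,j))"
      by (rule sum_Suc_split)
    also have "\<dots> = (if i = j then 1 else 0)"
    proof (cases i)
      case 0
      then show ?thesis using ij by (simp add: U'_def)
    next
      case (Suc i')
      show ?thesis
      proof (cases j)
        case 0
        then show ?thesis using ij Suc by (simp add: U'_def)
      next
        case (Suc j')
        have "(\<Sum>k\<in>{0..<n}. U' $$ (Suc k,i) * U' $$ (Suc k,j)) = (\<Sum>k\<in>{0..<n}. U3 $$ (k,i') * U3 $$ (k,j'))"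
          using ij Suc \<open>i = Suc i'\<close> by (intro sum.cong) (auto simp: U'_def)
        then show ?thesis using ij Suc \<open>i = Suc i'\<close> U3sum[of i' j'] by (simp add: U'_def)
      qed
    qed
    finally show "(U'\<^sup>T * U') $$ (i,j) = 1\<^sub>m (Suc n) $$ (i,j)" using ij by simp
  qed (use U'c in auto)
  then have U'o: "orth_mat (Suc n) U'" using U'c by (intro orth_matI) auto
  define es where "es = e # es3"
  have les: "length es = Suc n" using es3 by (simp add: es_def)
  have A'eq: "A' = U' * diagm es * U'\<^sup>T"
  proof (rule eq_matI)
    fix i j assume "i < dim_row (U' * diagm es * U'\<^sup>T)" "j < dim_col (U' * diagm es * U'\<^sup>T)"
    then have ij: "i < Suc n" "j < Suc n" using U'c by auto
    have "(U' * diagm es * U'\<^sup>T) $$ (i,j) = (\<Sum>k\<in>{0..<Suc n}. U' $$ (i,k) * es ! k * U' $$ (j,k))"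
      by (rule UDUt_index[OF U'c les ij])
    also have "\<dots> = U' $$ (i,0) * es ! 0 * U' $$ (j,0) + (\<Sum>k\<in>{0..<n}. U' $$ (i,Suc k) * es ! Suc k * U' $$ (j,Suc k))"
      by (rule sum_Suc_split)
    also have "\<dots> = A' $$ (i,j)"
    proof (cases i)
      case 0
      have "A' $$ (0,j) = A' $$ (j,0)" using A'sym ij by simp
      then show ?thesis using ij A'i0[of j] 0 by (simp add: U'_def es_def)
    next
      case (Suc i')
      show ?thesis
      proof (cases j)
        case 0
        then show ?thesis using ij Suc A'i0 by (simp add: U'_def es_def)
      next
        case (Suc j')
        have "(\<Sum>k\<in>{0..<n}. U' $$ (i,Suc k) * es ! Suc k * U' $$ (j,Suc k)) =
              (\<Sum>k\<in>{0..<n}. U3 $$ (i',k) * es3 ! k * U3 $$ (j',k))"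
          using ij Suc \<open>i = Suc i'\<close> by (intro sum.cong) (auto simp: U'_def es_def)
        also have "\<dots> = A3 $$ (i',j')" unfolding A3eq
          using UDUt_index[OF U3c es3, of i' j'] ij Suc \<open>i = Suc i'\<close> by simp
        also have "\<dots> = A' $$ (i,j)" using ij Suc \<open>i = Suc i'\<close> by (simp add: A3_def)
        finally show ?thesis using ij Suc \<open>i = Suc i'\<close> by (simp add: U'_def)
      qed
    qed
    finally show "A' $$ (i,j) = (U' * diagm es * U'\<^sup>T) $$ (i,j)" by simp
  qed (use U'c les A' in auto)
  define U where "U = H * U'"
  have Uo: "orth_mat (Suc n) U" unfolding U_def using orth_mat_mult[OF H U'o] .
  have D: "diagm es \<in> carrier_mat (Suc n) (Suc n)" using les by (metis diagm_carrier)
  have "H * A' * H\<^sup>T = (H * H\<^sup>T) * A * (H * H\<^sup>T)"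
    unfolding A'_def using Hc A by (simp add: assoc_mult_mat[of _ "Suc n" "Suc n" _ "Suc n" _ "Suc n"])
  also have "\<dots> = A" using HHt A by simp
  finally have "A = H * A' * H\<^sup>T" by simp
  also have "\<dots> = (H * U') * diagm es * (H * U')\<^sup>T"
    unfolding A'eq using Hc U'c D
    by (simp add: transpose_mult assoc_mult_mat[of _ "Suc n" "Suc n" _ "Suc n" _ "Suc n"])
  finally have "A = U * diagm es * U\<^sup>T" unfolding U_def .
  then show ?case using Uo les by blast
qed

lemma orth_cancel1:
  assumes "orth_mat N U" "M \<in> carrier_mat N k"
  shows "U\<^sup>T * (U * M) = M"
proof -
  have U: "U \<in> carrier_mat N N" "U\<^sup>T * U = 1\<^sub>m N" using assms(1) orth_mat_def by auto
  have "(U\<^sup>T * U) * M = U\<^sup>T * (U * M)" by (rule assoc_mult_mat) (use U assms(2) in auto)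
  then show ?thesis using U assms(2) by (metis left_mult_one_mat)
qed

lemma orth_cancel2:
  assumes "orth_mat N U" "M \<in> carrier_mat N k"
  shows "U * (U\<^sup>T * M) = M"
proof -
  have U: "U \<in> carrier_mat N N" "U * U\<^sup>T = 1\<^sub>m N" using assms(1) orth_mat_def by auto
  have "(U * U\<^sup>T) * M = U * (U\<^sup>T * M)" by (rule assoc_mult_mat) (use U assms(2) in auto)
  then show ?thesis using U assms(2) by (metis left_mult_one_mat)
qed

lemma orth_back:
  assumes "orth_mat N U" "x \<in> carrier_vec N"
  shows "U *\<^sub>v (U\<^sup>T *\<^sub>v x) = x" "U\<^sup>T *\<^sub>v (U *\<^sub>v x) = x"
proof -
  have U: "U \<in> carrier_mat N N" "U * U\<^sup>T = 1\<^sub>m N" "U\<^sup>T * U = 1\<^sub>m N" using assms(1) orth_mat_def by auto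
  have "(U * U\<^sup>T) *\<^sub>v x = U *\<^sub>v (U\<^sup>T *\<^sub>v x)" by (rule assoc_mult_mat_vec) (use U assms(2) in auto)
  then show "U *\<^sub>v (U\<^sup>T *\<^sub>v x) = x" using U assms(2) by (metis one_mult_mat_vec)
  have "(U\<^sup>T * U) *\<^sub>v x = U\<^sup>T *\<^sub>v (U *\<^sub>v x)" by (rule assoc_mult_mat_vec) (use U assms(2) in auto)
  then show "U\<^sup>T *\<^sub>v (U *\<^sub>v x) = x" using U assms(2) by (metis one_mult_mat_vec)
qed

lemma orth_norm:
  assumes "orth_mat N U" "w \<in> carrier_vec N"
  shows "(U *\<^sub>v w) \<bullet> (U *\<^sub>v w) = w \<bullet> w"
proof -
  have U: "U \<in> carrier_mat N N" using assms(1) orth_mat_def by auto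
  have "(U\<^sup>T *\<^sub>v (U *\<^sub>v w)) \<bullet> w = (U *\<^sub>v w) \<bullet> (U *\<^sub>v w)"
    by (rule transpose_vec_mult_scalar[OF U assms(2)]) (use U assms(2) in auto)
  then show ?thesis using orth_back[OF assms] by simp
qed

lemma sum_delta_l: assumes "i < (n::nat)" shows "(\<Sum>k\<in>{0..<n}. (if i = k then a k else 0) * b k) = a i * (b i :: real)"
proof -
  have "(\<Sum>k\<in>{0..<n}. (if i = k then a k else 0) * b k) = (\<Sum>k\<in>{0..<n}. if k = i then a k * b k else 0)"
    by (rule sum.cong) auto
  also have "\<dots> = a i * b i" using assms by simp
  finally show ?thesis .
qed

lemma diagm_mult_vec:
  assumes "length g = N" "y \<in> carrier_vec N"
  shows "diagm g *\<^sub>v y = vec N (\<lambda>l. g ! l * y $ l)"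
  using assms by (intro eq_vecI) (auto simp: diagm_def scalar_prod_def sum_delta_l)

lemma UDUt_mult_vec:
  assumes "U \<in> carrier_mat N N" "length g = N" "x \<in> carrier_vec N"
  shows "(U * diagm g * U\<^sup>T) *\<^sub>v x = U *\<^sub>v (diagm g *\<^sub>v (U\<^sup>T *\<^sub>v x))"
proof -
  have D: "diagm g \<in> carrier_mat N N" using assms(2) by (metis diagm_carrier)
  show ?thesis using assms D by (simp add: assoc_mult_mat_vec[of _ N N _ N])
qed

lemma diagm_mult:
  assumes "length a = N" "length b = N"
  shows "diagm a * diagm b = diagm (map (\<lambda>l. a ! l * b ! l) [0..<N])"
proof (rule eq_matI)
  fix i j assume ij: "i < dim_row (diagm (map (\<lambda>l. a ! l * b ! l) [0..<N]))" "j < dim_col (diagm (map (\<lambda>l. a ! l * b ! l) [0..<N]))"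
  then have ij: "i < N" "j < N" by auto
  have "(diagm a * diagm b) $$ (i,j) = (\<Sum>k\<in>{0..<N}. (if i = k then a ! k else 0) * (if k = j then b ! k else 0))"
    using assms ij by (auto simp: diagm_def scalar_prod_def intro!: sum.cong)
  also have "\<dots> = a ! i * (if i = j then b ! i else 0)" by (rule sum_delta_l) (use ij in auto)
  finally show "(diagm a * diagm b) $$ (i,j) = diagm (map (\<lambda>l. a ! l * b ! l) [0..<N]) $$ (i,j)"
    using ij by (auto simp: diagm_def)
qed (use assms in auto)

lemma UDUt_pow:
  assumes U: "orth_mat N U" and cs: "length cs = N"
  shows "(U * diagm cs * U\<^sup>T) ^\<^sub>m k = U * diagm (map (\<lambda>c. c ^ k) cs) * U\<^sup>T"
proof (induction k)
  case 0
  have Uc: "U \<in> carrier_mat N N" "U * U\<^sup>T = 1\<^sub>m N" using U orth_mat_def by auto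
  have "diagm (map (\<lambda>c. c ^ 0) cs) = 1\<^sub>m N" using cs by (intro eq_matI) (auto simp: diagm_def)
  then show ?case using Uc cs by simp
next
  case (Suc k)
  have Uc: "U \<in> carrier_mat N N" using U orth_mat_def by auto
  define G where "G = diagm (map (\<lambda>c. c ^ k) cs)"
  have G: "G \<in> carrier_mat N N" using cs by (metis G_def diagm_carrier length_map)
  have C: "diagm cs \<in> carrier_mat N N" using cs by (metis diagm_carrier)
  have "(U * diagm cs * U\<^sup>T) ^\<^sub>m Suc k = (U * G * U\<^sup>T) * (U * diagm cs * U\<^sup>T)"
    using Suc by (simp add: G_def)
  also have "\<dots> = U * (G * (U\<^sup>T * (U * (diagm cs * U\<^sup>T))))"
    using Uc G C by (simp add: assoc_mult_mat[of _ N N _ N _ N])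
  also have "U\<^sup>T * (U * (diagm cs * U\<^sup>T)) = diagm cs * U\<^sup>T"
    using orth_cancel1[OF U, of "diagm cs * U\<^sup>T" N] C Uc by simp
  also have "U * (G * (diagm cs * U\<^sup>T)) = U * (G * diagm cs) * U\<^sup>T"
    using Uc G C by (simp add: assoc_mult_mat[of _ N N _ N _ N])
  also have "G * diagm cs = diagm (map (\<lambda>c. c ^ Suc k) cs)"
    unfolding G_def using cs
    by (subst diagm_mult[of _ N]) (auto intro!: arg_cong[where f = diagm] nth_equalityI)
  finally show ?case .
qed

lemma mat_exp_UDUt:
  assumes U: "orth_mat N U" and cs: "length cs = N"
  shows "mat_exp (U * diagm cs * U\<^sup>T) = U * diagm (map exp cs) * U\<^sup>T"
proof -
  have Uc: "U \<in> carrier_mat N N" using U orth_mat_def by auto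
  show ?thesis
  proof (rule eq_matI)
    fix i j assume "i < dim_row (U * diagm (map exp cs) * U\<^sup>T)" "j < dim_col (U * diagm (map exp cs) * U\<^sup>T)"
    then have ij: "i < N" "j < N" using Uc by auto
    have pk: "((U * diagm cs * U\<^sup>T) ^\<^sub>m k) $$ (i,j) / fact k
       = (\<Sum>l\<in>{0..<N}. U $$ (i,l) * ((cs ! l) ^ k / fact k) * U $$ (j,l))" for k
      unfolding UDUt_pow[OF U cs]
      using UDUt_index[OF Uc _ ij, of "map (\<lambda>c. c ^ k) cs"] cs
      by (simp add: sum_divide_distrib)
    have "(\<lambda>k. \<Sum>l\<in>{0..<N}. U $$ (i,l) * ((cs ! l) ^ k / fact k) * U $$ (j,l))
          sums (\<Sum>l\<in>{0..<N}. U $$ (i,l) * exp (cs ! l) * U $$ (j,l))"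
    proof (rule sums_sum)
      fix l
      have "(\<lambda>k. (cs ! l) ^ k / fact k) sums exp (cs ! l)"
        using exp_converges[of "cs ! l"] by (simp add: divide_inverse mult.commute)
      then show "(\<lambda>k. U $$ (i,l) * ((cs ! l) ^ k / fact k) * U $$ (j,l)) sums (U $$ (i,l) * exp (cs ! l) * U $$ (j,l))"
        by (intro sums_mult sums_mult2)
    qed
    then have "(\<Sum>k. ((U * diagm cs * U\<^sup>T) ^\<^sub>m k) $$ (i,j) / fact k) = (\<Sum>l\<in>{0..<N}. U $$ (i,l) * exp (cs ! l) * U $$ (j,l))"
      unfolding pk by (rule sums_unique[symmetric])
    also have "\<dots> = (U * diagm (map exp cs) * U\<^sup>T) $$ (i,j)"
      using UDUt_index[OF Uc _ ij, of "map exp cs"] cs by simp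
    finally show "mat_exp (U * diagm cs * U\<^sup>T) $$ (i,j) = (U * diagm (map exp cs) * U\<^sup>T) $$ (i,j)"
      using ij Uc cs by (simp add: mat_exp_def)
  qed (use Uc cs in \<open>auto simp: mat_exp_def\<close>)
qed

lemma vec_sq_sum: "(y :: real vec) \<in> carrier_vec N \<Longrightarrow> y \<bullet> y = (\<Sum>l\<in>{0..<N}. (y $ l)^2)"
  by (simp add: scalar_prod_def power2_eq_square)

lemma exp_contract:
  fixes L :: "real mat"
  assumes L: "L \<in> carrier_mat N N" and sym: "L\<^sup>T = L"
    and psd: "\<And>x. x \<in> carrier_vec N \<Longrightarrow> 0 \<le> x \<bullet> (L *\<^sub>v x)" and s: "s > 0"
  shows "mat_exp (- (s \<cdot>\<^sub>m L)) \<in> carrier_mat N N"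
    and "\<And>x. x \<in> carrier_vec N \<Longrightarrow> (mat_exp (- (s \<cdot>\<^sub>m L)) *\<^sub>v x) \<bullet> (mat_exp (- (s \<cdot>\<^sub>m L)) *\<^sub>v x) \<le> x \<bullet> x"
    and "\<And>x. x \<in> carrier_vec N \<Longrightarrow> (mat_exp (- (s \<cdot>\<^sub>m L)) *\<^sub>v x) \<bullet> (mat_exp (- (s \<cdot>\<^sub>m L)) *\<^sub>v x) = x \<bullet> x
        \<Longrightarrow> L *\<^sub>v x = 0\<^sub>v N \<and> mat_exp (- (s \<cdot>\<^sub>m L)) *\<^sub>v x = x"
proof -
  obtain U es where U: "orth_mat N U" and les: "length es = N" and Leq: "L = U * diagm es * U\<^sup>T"
    using spectral[OF L sym] by auto
  have Uc: "U \<in> carrier_mat N N" using U orth_mat_def by auto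
  have De: "diagm es \<in> carrier_mat N N" using les by (metis diagm_carrier)
  define cs where "cs = map (\<lambda>d. - s * d) es"
  have lcs: "length cs = N" using les by (simp add: cs_def)
  have Beq: "- (s \<cdot>\<^sub>m L) = U * diagm cs * U\<^sup>T"
  proof (rule eq_matI)
    fix i j assume "i < dim_row (U * diagm cs * U\<^sup>T)" "j < dim_col (U * diagm cs * U\<^sup>T)"
    then have ij: "i < N" "j < N" using Uc by auto
    have "(- (s \<cdot>\<^sub>m L)) $$ (i,j) = - s * L $$ (i,j)" using ij L by simp
    also have "\<dots> = - s * (\<Sum>k\<in>{0..<N}. U $$ (i,k) * es ! k * U $$ (j,k))"
      using UDUt_index[OF Uc les ij] Leq by simp
    also have "\<dots> = (\<Sum>k\<in>{0..<N}. U $$ (i,k) * cs ! k * U $$ (j,k))"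
      unfolding sum_distrib_left by (rule sum.cong) (auto simp: cs_def les)
    also have "\<dots> = (U * diagm cs * U\<^sup>T) $$ (i,j)" using UDUt_index[OF Uc lcs ij] by simp
    finally show "(- (s \<cdot>\<^sub>m L)) $$ (i,j) = (U * diagm cs * U\<^sup>T) $$ (i,j)" .
  qed (use L Uc lcs in auto)
  define g where "g = map exp cs"
  have lg: "length g = N" using lcs by (simp add: g_def)
  have Eeq: "mat_exp (- (s \<cdot>\<^sub>m L)) = U * diagm g * U\<^sup>T"
    unfolding Beq g_def by (rule mat_exp_UDUt[OF U lcs])
  have Dg: "diagm g \<in> carrier_mat N N" using lg by (metis diagm_carrier)
  show "mat_exp (- (s \<cdot>\<^sub>m L)) \<in> carrier_mat N N" unfolding Eeq using Uc Dg by simp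
  have quad: "x \<bullet> (L *\<^sub>v x) = (\<Sum>l\<in>{0..<N}. es ! l * ((U\<^sup>T *\<^sub>v x) $ l)^2)" if x: "x \<in> carrier_vec N" for x
  proof -
    define y where "y = U\<^sup>T *\<^sub>v x"
    have y: "y \<in> carrier_vec N" using Uc x by (simp add: y_def)
    have "x \<bullet> (L *\<^sub>v x) = x \<bullet> (U *\<^sub>v (diagm es *\<^sub>v y))"
      unfolding Leq y_def using UDUt_mult_vec[OF Uc les x] by simp
    also have "\<dots> = y \<bullet> (diagm es *\<^sub>v y)"
      unfolding y_def by (rule transpose_vec_mult_scalar[symmetric, OF Uc _ x]) (use De y y_def in simp)
    also have "\<dots> = (\<Sum>l\<in>{0..<N}. es ! l * (y $ l)^2)"
      using y les by (simp add: diagm_mult_vec scalar_prod_def power2_eq_square mult_ac)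
    finally show ?thesis unfolding y_def .
  qed
  have esnn: "es ! l \<ge> 0" if l: "l < N" for l
  proof -
    define x where "x = U *\<^sub>v unit_vec N l"
    have x: "x \<in> carrier_vec N" using Uc by (simp add: x_def)
    have ux: "U\<^sup>T *\<^sub>v x = unit_vec N l" unfolding x_def using orth_back(2)[OF U] by simp
    have "x \<bullet> (L *\<^sub>v x) = (\<Sum>k\<in>{0..<N}. es ! k * ((unit_vec N l) $ k)^2)" using quad[OF x] ux by simp
    also have "\<dots> = (\<Sum>k\<in>{0..<N}. if k = l then es ! k else 0)"
      by (rule sum.cong) (auto simp: unit_vec_def)
    also have "\<dots> = es ! l" using l by simp
    finally show ?thesis using psd[OF x] by simp
  qed
  have g01: "0 < g ! l \<and> g ! l \<le> 1" if "l < N" for l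
    using esnn[OF that] s that les by (simp add: g_def cs_def)
  have normE: "(mat_exp (- (s \<cdot>\<^sub>m L)) *\<^sub>v x) \<bullet> (mat_exp (- (s \<cdot>\<^sub>m L)) *\<^sub>v x) = (\<Sum>l\<in>{0..<N}. (g ! l * (U\<^sup>T *\<^sub>v x) $ l)^2)"
    and normx: "x \<bullet> x = (\<Sum>l\<in>{0..<N}. ((U\<^sup>T *\<^sub>v x) $ l)^2)" if x: "x \<in> carrier_vec N" for x
  proof -
    define y where "y = U\<^sup>T *\<^sub>v x"
    have y: "y \<in> carrier_vec N" using Uc x by (simp add: y_def)
    have Ex: "mat_exp (- (s \<cdot>\<^sub>m L)) *\<^sub>v x = U *\<^sub>v (diagm g *\<^sub>v y)"
      unfolding Eeq y_def using UDUt_mult_vec[OF Uc lg x] by simp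
    have "(U *\<^sub>v (diagm g *\<^sub>v y)) \<bullet> (U *\<^sub>v (diagm g *\<^sub>v y)) = (diagm g *\<^sub>v y) \<bullet> (diagm g *\<^sub>v y)"
      by (rule orth_norm[OF U]) (use Dg y in simp)
    also have "\<dots> = (\<Sum>l\<in>{0..<N}. (g ! l * y $ l)^2)"
      using lg y by (simp add: diagm_mult_vec vec_sq_sum[of _ N])
    finally show "(mat_exp (- (s \<cdot>\<^sub>m L)) *\<^sub>v x) \<bullet> (mat_exp (- (s \<cdot>\<^sub>m L)) *\<^sub>v x) = (\<Sum>l\<in>{0..<N}. (g ! l * (U\<^sup>T *\<^sub>v x) $ l)^2)"
      unfolding Ex y_def .
    have "x \<bullet> x = (U *\<^sub>v y) \<bullet> (U *\<^sub>v y)" unfolding y_def using orth_back(1)[OF U x] by simp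
    also have "\<dots> = y \<bullet> y" by (rule orth_norm[OF U y])
    finally show "x \<bullet> x = (\<Sum>l\<in>{0..<N}. ((U\<^sup>T *\<^sub>v x) $ l)^2)" using vec_sq_sum[OF y] unfolding y_def by simp
  qed
  have termle: "(g ! l * a)^2 \<le> a^2" if "l < N" for l a
  proof -
    have "(g ! l * a)^2 = (g ! l)^2 * a^2" by (simp add: power_mult_distrib)
    also have "\<dots> \<le> 1 * a^2" using g01[OF that]
      by (intro mult_right_mono) (auto simp: power_le_one)
    finally show ?thesis by simp
  qed
  show "(mat_exp (- (s \<cdot>\<^sub>m L)) *\<^sub>v x) \<bullet> (mat_exp (- (s \<cdot>\<^sub>m L)) *\<^sub>v x) \<le> x \<bullet> x" if x: "x \<in> carrier_vec N" for x
    unfolding normE[OF x] normx[OF x] by (rule sum_mono) (use termle in auto)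
  show "L *\<^sub>v x = 0\<^sub>v N \<and> mat_exp (- (s \<cdot>\<^sub>m L)) *\<^sub>v x = x"
    if x: "x \<in> carrier_vec N" and eq: "(mat_exp (- (s \<cdot>\<^sub>m L)) *\<^sub>v x) \<bullet> (mat_exp (- (s \<cdot>\<^sub>m L)) *\<^sub>v x) = x \<bullet> x" for x
  proof -
    define y where "y = U\<^sup>T *\<^sub>v x"
    have y: "y \<in> carrier_vec N" using Uc x by (simp add: y_def)
    have "(\<Sum>l\<in>{0..<N}. (y $ l)^2 - (g ! l * y $ l)^2) = 0"
      using eq unfolding normE[OF x] normx[OF x] y_def by (simp add: sum_subtractf)
    then have each: "(y $ l)^2 - (g ! l * y $ l)^2 = 0" if "l < N" for l
      using that termle by (subst (asm) sum_nonneg_eq_0_iff) auto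
    have yl: "y $ l = 0 \<or> es ! l = 0" if l: "l < N" for l
    proof (cases "y $ l = 0")
      case False
      have "(y $ l)^2 * (1 - (g ! l)^2) = 0" using each[OF l] by (simp add: algebra_simps power_mult_distrib)
      then have "(g ! l)^2 = 1" using False by simp
      then have "g ! l = 1" using g01[OF l] by (simp add: power2_eq_1_iff)
      then have "exp (- s * es ! l) = 1" using l les by (simp add: g_def cs_def)
      then have "- s * es ! l = 0" by simp
      then show ?thesis using s by simp
    qed simp
    have D0: "diagm es *\<^sub>v y = 0\<^sub>v N"
      using yl les y by (intro eq_vecI) (auto simp: diagm_mult_vec)
    have Dg: "diagm g *\<^sub>v y = y"
    proof (rule eq_vecI)
      fix l assume "l < dim_vec y"
      then have l: "l < N" using y by simp
      have "g ! l = 1 \<or> y $ l = 0" using yl[OF l] l les by (auto simp: g_def cs_def)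
      then show "(diagm g *\<^sub>v y) $ l = y $ l" using l lg y by (auto simp: diagm_mult_vec)
    qed (use lg y in simp)
    have "L *\<^sub>v x = U *\<^sub>v (diagm es *\<^sub>v y)" unfolding Leq y_def using UDUt_mult_vec[OF Uc les x] by simp
    also have "\<dots> = 0\<^sub>v N" using D0 Uc by (intro eq_vecI) (auto simp: scalar_prod_def)
    finally have "L *\<^sub>v x = 0\<^sub>v N" .
    moreover have "mat_exp (- (s \<cdot>\<^sub>m L)) *\<^sub>v x = x"
      unfolding Eeq using UDUt_mult_vec[OF Uc lg x] Dg orth_back(1)[OF U x] by (simp add: y_def)
    ultimately show ?thesis by simp
  qed
qed

lemma sum_blocks:
  fixes f :: "nat \<Rightarrow> 'b :: comm_monoid_add"
  shows "(\<Sum>p\<in>{0..<d*n}. f p) = (\<Sum>i\<in>{0..<n}. \<Sum>a\<in>{0..<d}. f (i*d + a))"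
proof (induction n)
  case 0
  then show ?case by simp
next
  case (Suc n)
  have U: "{0..<d * Suc n} = {0..<d*n} \<union> {d*n..<d*n+d}" by auto
  have "(\<Sum>p\<in>{0..<d*Suc n}. f p) = (\<Sum>p\<in>{0..<d*n}. f p) + (\<Sum>p\<in>{d*n..<d*n+d}. f p)"
    unfolding U by (rule sum.union_disjoint) auto
  also have "(\<Sum>p\<in>{d*n..<d*n+d}. f p) = (\<Sum>a\<in>{0..<d}. f (n*d + a))"
    using sum.shift_bounds_nat_ivl[of f 0 "d*n" d] by (simp add: add.commute mult.commute)
  finally show ?case using Suc by simp
qed

definition qf :: "nat \<Rightarrow> real mat \<Rightarrow> (nat \<Rightarrow> real) \<Rightarrow> (nat \<Rightarrow> real) \<Rightarrow> real" where
  "qf d M y z = (\<Sum>a\<in>{0..<d}. \<Sum>b\<in>{0..<d}. y a * M $$ (a,b) * z b)"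

lemma psd_qf:
  assumes "psd_mat d M"
  shows "0 \<le> qf d M y y"
proof -
  have M: "M \<in> carrier_mat d d" using assms psd_mat_def by auto
  define v where "v = vec d y"
  have "0 \<le> v \<bullet> (M *\<^sub>v v)" using assms unfolding psd_mat_def v_def by auto
  also have "v \<bullet> (M *\<^sub>v v) = qf d M y y"
    unfolding qf_def v_def using M
    by (simp add: scalar_prod_def sum_distrib_left mult_ac)
  finally show ?thesis .
qed

lemma qf_sym:
  assumes M: "M \<in> carrier_mat d d" "M\<^sup>T = M"
  shows "qf d M z y = qf d M y z"
proof -
  have Mab: "M $$ (a,b) = M $$ (b,a)" if "a < d" "b < d" for a b
    using M that by (metis carrier_matD index_transpose_mat(1))
  have "qf d M z y = (\<Sum>b\<in>{0..<d}. \<Sum>a\<in>{0..<d}. z a * M $$ (a,b) * y b)"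
    unfolding qf_def by (rule sum.swap)
  also have "\<dots> = qf d M y z" unfolding qf_def
    by (intro sum.cong refl) (auto simp: Mab mult_ac)
  finally show ?thesis .
qed

lemma qf_diff: "qf d M (\<lambda>a. y a - z a) (\<lambda>a. y a - z a) = qf d M y y - qf d M y z - qf d M z y + qf d M z z"
  unfolding qf_def by (simp add: sum_subtractf sum.distrib algebra_simps)

lemma qf_add: "qf d M (\<lambda>a. y a + z a) (\<lambda>a. y a + z a) = qf d M y y + qf d M y z + qf d M z y + qf d M z z"
  unfolding qf_def by (simp add: sum.distrib algebra_simps)

lemma qf_uminus: assumes "M \<in> carrier_mat d d" shows "qf d (- M) y z = - qf d M y z"
  unfolding qf_def using assms by (simp add: sum_negf)

lemma blk_bound:
  assumes "i < n" "a < (d::nat)"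
  shows "i*d + a < d*n"
proof -
  have "(i+1)*d \<le> n*d" using assms(1) by (intro mult_right_mono) auto
  then show ?thesis using assms(2) by (simp add: algebra_simps)
qed

lemma blk_div: "a < (d::nat) \<Longrightarrow> (i*d + a) div d = i"
  by simp

lemma blk_mod: "a < (d::nat) \<Longrightarrow> (i*d + a) mod d = a"
  by simp

lemma lap_dims[simp]: "dim_row (mw_laplacian d n Wt) = d*n" "dim_col (mw_laplacian d n Wt) = d*n"
  by (simp_all add: mw_laplacian_def)

lemma lap_carrier[simp]: "mw_laplacian d n Wt \<in> carrier_mat (d*n) (d*n)"
  by (simp add: mw_laplacian_def)

lemma lap_entry:
  assumes "i < n" "j < n" "a < d" "b < d"
  shows "mw_laplacian d n Wt $$ (i*d+a, j*d+b) =
    (if i = j then (\<Sum>l<n. abs_w d (Wt i l) $$ (a,b)) else 0) - Wt i j $$ (a,b)"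
  using assms blk_bound[of i n a d] blk_bound[of j n b d]
  by (simp add: mw_laplacian_def)

lemma abs_w_sym:
  assumes M: "M \<in> carrier_mat d d" "M\<^sup>T = M" and ab: "a < d" "b < d"
  shows "abs_w d M $$ (b,a) = abs_w d M $$ (a,b)"
proof -
  have Mab: "M $$ (b,a) = M $$ (a,b)"
    using M ab by (metis carrier_matD index_transpose_mat(1))
  show ?thesis using Mab M ab by (auto simp: abs_w_def)
qed

lemma lap_sym:
  assumes Wc: "\<And>i j. i < n \<Longrightarrow> j < n \<Longrightarrow> Wt i j \<in> carrier_mat d d"
    and Wsym: "\<And>i j. i < n \<Longrightarrow> j < n \<Longrightarrow> (Wt i j)\<^sup>T = Wt i j"
    and Wsw: "\<And>i j. i < n \<Longrightarrow> j < n \<Longrightarrow> Wt i j = Wt j i"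
  shows "(mw_laplacian d n Wt)\<^sup>T = mw_laplacian d n Wt"
proof (rule eq_matI)
  fix p q assume "p < dim_row (mw_laplacian d n Wt)" "q < dim_col (mw_laplacian d n Wt)"
  then have pq: "p < d*n" "q < d*n" by (auto simp: mw_laplacian_def)
  then have d: "d > 0" by (cases d) auto
  have i: "p div d < n" and j: "q div d < n" using pq by (auto simp: less_mult_imp_div_less mult.commute)
  have a: "p mod d < d" and b: "q mod d < d" using d by auto
  have e1: "Wt (q div d) (p div d) $$ (q mod d, p mod d) = Wt (p div d) (q div d) $$ (p mod d, q mod d)"
    using Wsw[OF j i] Wsym[OF i j] Wc[OF i j] a b by (metis carrier_matD index_transpose_mat(1))
  have e2: "abs_w d (Wt (p div d) l) $$ (q mod d, p mod d) = abs_w d (Wt (p div d) l) $$ (p mod d, q mod d)"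
    if "l < n" for l
    using abs_w_sym[OF Wc[OF i that] Wsym[OF i that] a b] .
  have "mw_laplacian d n Wt $$ (q,p) = mw_laplacian d n Wt $$ (p,q)"
    using pq e1 e2 by (auto simp: mw_laplacian_def intro!: sum.cong)
  then show "(mw_laplacian d n Wt)\<^sup>T $$ (p,q) = mw_laplacian d n Wt $$ (p,q)" using pq
    by (simp add: mw_laplacian_def)
qed auto

lemma lap_quad:
  assumes d: "d > 0" and x: "x \<in> carrier_vec (d*n)"
  shows "x \<bullet> (mw_laplacian d n Wt *\<^sub>v x) = (\<Sum>i\<in>{0..<n}. \<Sum>j\<in>{0..<n}.
      qf d (abs_w d (Wt i j)) (\<lambda>a. x $ (i*d+a)) (\<lambda>a. x $ (i*d+a))
      - qf d (Wt i j) (\<lambda>a. x $ (i*d+a)) (\<lambda>a. x $ (j*d+a)))"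
proof -
  let ?L = "mw_laplacian d n Wt"
  define X where "X = (\<lambda>i a. x $ (i*d+a))"
  define S where "S = (\<lambda>i a b. \<Sum>l<n. abs_w d (Wt i l) $$ (a,b))"
  have "x \<bullet> (?L *\<^sub>v x) = (\<Sum>p\<in>{0..<d*n}. x $ p * (\<Sum>q\<in>{0..<d*n}. ?L $$ (p,q) * x $ q))"
    using x by (auto simp: scalar_prod_def intro!: sum.cong)
  also have "\<dots> = (\<Sum>i\<in>{0..<n}. \<Sum>a\<in>{0..<d}. X i a * (\<Sum>j\<in>{0..<n}. \<Sum>b\<in>{0..<d}.
       ((if i = j then S i a b else 0) - Wt i j $$ (a,b)) * X j b))"
    unfolding sum_blocks X_def S_def by (auto simp: lap_entry intro!: sum.cong)
  also have "\<dots> = (\<Sum>i\<in>{0..<n}. \<Sum>j\<in>{0..<n}.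
      qf d (abs_w d (Wt i j)) (X i) (X i) - qf d (Wt i j) (X i) (X j))"
  proof (rule sum.cong[OF refl])
    fix i assume "i \<in> {0..<n}"
    then have i: "i < n" by simp
    have inner: "(\<Sum>j\<in>{0..<n}. \<Sum>b\<in>{0..<d}. ((if i = j then S i a b else 0) - Wt i j $$ (a,b)) * X j b)
      = (\<Sum>b\<in>{0..<d}. S i a b * X i b) - (\<Sum>j\<in>{0..<n}. \<Sum>b\<in>{0..<d}. Wt i j $$ (a,b) * X j b)" for a
    proof -
      have "(\<Sum>j\<in>{0..<n}. \<Sum>b\<in>{0..<d}. ((if i = j then S i a b else 0) - Wt i j $$ (a,b)) * X j b)
        = (\<Sum>j\<in>{0..<n}. (if j = i then (\<Sum>b\<in>{0..<d}. S i a b * X j b) else 0)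
             - (\<Sum>b\<in>{0..<d}. Wt i j $$ (a,b) * X j b))"
        by (intro sum.cong refl) (auto simp: sum_subtractf left_diff_distrib)
      also have "\<dots> = (\<Sum>b\<in>{0..<d}. S i a b * X i b) - (\<Sum>j\<in>{0..<n}. \<Sum>b\<in>{0..<d}. Wt i j $$ (a,b) * X j b)"
        using i by (simp add: sum_subtractf)
      finally show ?thesis .
    qed
    have "(\<Sum>a\<in>{0..<d}. X i a * (\<Sum>j\<in>{0..<n}. \<Sum>b\<in>{0..<d}.
       ((if i = j then S i a b else 0) - Wt i j $$ (a,b)) * X j b))
      = (\<Sum>a\<in>{0..<d}. \<Sum>b\<in>{0..<d}. X i a * S i a b * X i b)
        - (\<Sum>a\<in>{0..<d}. \<Sum>j\<in>{0..<n}. \<Sum>b\<in>{0..<d}. X i a * Wt i j $$ (a,b) * X j b)"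
      unfolding inner by (simp add: right_diff_distrib sum_subtractf sum_distrib_left mult_ac)
    also have "(\<Sum>a\<in>{0..<d}. \<Sum>b\<in>{0..<d}. X i a * S i a b * X i b)
       = (\<Sum>a\<in>{0..<d}. \<Sum>b\<in>{0..<d}. \<Sum>l\<in>{0..<n}. X i a * abs_w d (Wt i l) $$ (a,b) * X i b)"
      unfolding S_def by (simp add: sum_distrib_left sum_distrib_right atLeast0LessThan)
    also have "\<dots> = (\<Sum>a\<in>{0..<d}. \<Sum>l\<in>{0..<n}. \<Sum>b\<in>{0..<d}. X i a * abs_w d (Wt i l) $$ (a,b) * X i b)"
      by (rule sum.cong[OF refl]) (rule sum.swap)
    also have "\<dots> = (\<Sum>l\<in>{0..<n}. \<Sum>a\<in>{0..<d}. \<Sum>b\<in>{0..<d}. X i a * abs_w d (Wt i l) $$ (a,b) * X i b)"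
      by (rule sum.swap)
    also have "\<dots> = (\<Sum>j\<in>{0..<n}. qf d (abs_w d (Wt i j)) (X i) (X i))" unfolding qf_def ..
    also have "(\<Sum>a\<in>{0..<d}. \<Sum>j\<in>{0..<n}. \<Sum>b\<in>{0..<d}. X i a * Wt i j $$ (a,b) * X j b)
       = (\<Sum>j\<in>{0..<n}. \<Sum>a\<in>{0..<d}. \<Sum>b\<in>{0..<d}. X i a * Wt i j $$ (a,b) * X j b)"
      by (rule sum.swap)
    also have "\<dots> = (\<Sum>j\<in>{0..<n}. qf d (Wt i j) (X i) (X j))" unfolding qf_def ..
    finally show "(\<Sum>a\<in>{0..<d}. X i a * (\<Sum>j\<in>{0..<n}. \<Sum>b\<in>{0..<d}.
       ((if i = j then S i a b else 0) - Wt i j $$ (a,b)) * X j b))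
      = (\<Sum>j\<in>{0..<n}. qf d (abs_w d (Wt i j)) (X i) (X i) - qf d (Wt i j) (X i) (X j))"
      by (simp add: sum_subtractf)
  qed
  finally show ?thesis unfolding X_def .
qed

lemma lap_psd:
  assumes d: "d > 0" and x: "x \<in> carrier_vec (d*n)"
    and Wc: "\<And>i j. i < n \<Longrightarrow> j < n \<Longrightarrow> Wt i j \<in> carrier_mat d d"
    and Wsym: "\<And>i j. i < n \<Longrightarrow> j < n \<Longrightarrow> (Wt i j)\<^sup>T = Wt i j"
    and Wsw: "\<And>i j. i < n \<Longrightarrow> j < n \<Longrightarrow> Wt i j = Wt j i"
    and Wsgn: "\<And>i j. i < n \<Longrightarrow> j < n \<Longrightarrow> psd_mat d (Wt i j) \<or> nsd_mat d (Wt i j)"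
  shows "0 \<le> x \<bullet> (mw_laplacian d n Wt *\<^sub>v x)"
proof -
  define X where "X = (\<lambda>i a. x $ (i*d+a))"
  define F where "F = (\<lambda>i j. qf d (abs_w d (Wt i j)) (X i) (X i) - qf d (Wt i j) (X i) (X j))"
  have eq: "x \<bullet> (mw_laplacian d n Wt *\<^sub>v x) = (\<Sum>i\<in>{0..<n}. \<Sum>j\<in>{0..<n}. F i j)"
    unfolding lap_quad[OF d x] F_def X_def ..
  have Fpair: "0 \<le> F i j + F j i" if ij: "i < n" "j < n" for i j
  proof -
    define M where "M = Wt i j"
    have M: "M \<in> carrier_mat d d" "M\<^sup>T = M" using Wc[OF ij] Wsym[OF ij] by (auto simp: M_def)
    have Mji: "Wt j i = M" using Wsw[OF ij] by (simp add: M_def)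
    have sw: "qf d M (X j) (X i) = qf d M (X i) (X j)" by (rule qf_sym[OF M])
    have FF: "F i j + F j i = qf d (abs_w d M) (X i) (X i) + qf d (abs_w d M) (X j) (X j) - 2 * qf d M (X i) (X j)"
      unfolding F_def M_def[symmetric] Mji using sw by simp
    show ?thesis
    proof (cases "psd_mat d M")
      case True
      have "0 \<le> qf d M (\<lambda>a. X i a - X j a) (\<lambda>a. X i a - X j a)" by (rule psd_qf[OF True])
      then show ?thesis unfolding FF qf_diff using True sw by (simp add: abs_w_def)
    next
      case False
      then have "nsd_mat d M" using Wsgn[OF ij] by (simp add: M_def)
      then have "psd_mat d (- M)" by (simp add: nsd_mat_def)
      then have "0 \<le> qf d (- M) (\<lambda>a. X i a + X j a) (\<lambda>a. X i a + X j a)" by (rule psd_qf)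
      then show ?thesis unfolding FF qf_add qf_uminus[OF M(1)] using False sw
        by (simp add: abs_w_def qf_uminus[OF M(1)])
    qed
  qed
  have "(\<Sum>i\<in>{0..<n}. \<Sum>j\<in>{0..<n}. F i j) = (\<Sum>j\<in>{0..<n}. \<Sum>i\<in>{0..<n}. F i j)" by (rule sum.swap)
  then have "2 * (\<Sum>i\<in>{0..<n}. \<Sum>j\<in>{0..<n}. F i j) = (\<Sum>i\<in>{0..<n}. \<Sum>j\<in>{0..<n}. F i j + F j i)"
    by (simp add: sum.distrib)
  also have "\<dots> \<ge> 0" using Fpair by (intro sum_nonneg) auto
  finally show ?thesis unfolding eq by simp
qed

lemma pw_integral:
  fixes tk :: "nat \<Rightarrow> real" and g :: "real \<Rightarrow> real" and c :: "nat \<Rightarrow> real"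
  assumes mono: "\<And>k. tk k \<le> tk (Suc k)"
    and gc: "\<And>k t. tk k \<le> t \<Longrightarrow> t < tk (Suc k) \<Longrightarrow> g t = c k"
  shows "(g has_integral (\<Sum>k\<in>{k0..<k0+j}. (tk (Suc k) - tk k) * c k)) {tk k0..tk (k0+j)}"
proof (induction j)
  case 0
  then show ?case using has_integral_refl(2)[of g "tk k0"] by simp
next
  case (Suc j)
  let ?a = "tk (k0+j)" and ?b = "tk (Suc (k0+j))"
  have ab: "?a \<le> ?b" by (rule mono)
  have const: "((\<lambda>x. c (k0+j)) has_integral ((?b - ?a) * c (k0+j))) {?a..?b}"
    using has_integral_const_real[of "c (k0+j)" ?a ?b] ab by simp
  have piece: "(g has_integral ((?b - ?a) * c (k0+j))) {?a..?b}"
  proof (rule has_integral_spike_finite[of "{?b}" _ g "\<lambda>x. c (k0+j)"])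
    show "((\<lambda>x. c (k0+j)) has_integral ((?b - ?a) * c (k0+j))) {?a..?b}" by (rule const)
    show "g x = c (k0+j)" if "x \<in> {?a..?b} - {?b}" for x
      using that by (intro gc) auto
  qed auto
  have le: "tk k0 \<le> ?a" by (rule lift_Suc_mono_le[of tk]) (use mono in auto)
  have "(g has_integral ((\<Sum>k\<in>{k0..<k0+j}. (tk (Suc k) - tk k) * c k) + (?b - ?a) * c (k0+j))) {tk k0..?b}"
    by (rule has_integral_combine[OF le ab Suc.IH piece])
  moreover have "(\<Sum>k\<in>{k0..<k0+Suc j}. (tk (Suc k) - tk k) * c k)
      = (\<Sum>k\<in>{k0..<k0+j}. (tk (Suc k) - tk k) * c k) + (?b - ?a) * c (k0+j)"
    unfolding add_Suc_right by (rule sum.atLeastLessThan_Suc) simp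
  moreover have "k0 + Suc j = Suc (k0 + j)" by simp
  ultimately show ?case by (simp only:)
qed

lemma pw_integral_ho:
  fixes tk :: "nat \<Rightarrow> real" and g :: "real \<Rightarrow> real" and c :: "nat \<Rightarrow> real"
  assumes mono: "\<And>k. tk k \<le> tk (Suc k)"
    and gc: "\<And>k t. tk k \<le> t \<Longrightarrow> t < tk (Suc k) \<Longrightarrow> g t = c k"
    and kk: "k' \<le> k''"
  shows "integral {tk k'..<tk k''} g = (\<Sum>k\<in>{k'..<k''}. (tk (Suc k) - tk k) * c k)"
proof -
  have "(g has_integral (\<Sum>k\<in>{k'..<k'+(k''-k')}. (tk (Suc k) - tk k) * c k)) {tk k'..tk (k'+(k''-k'))}"
    by (rule pw_integral[of tk g c, OF mono gc])
  then have I: "(g has_integral (\<Sum>k\<in>{k'..<k''}. (tk (Suc k) - tk k) * c k)) {tk k'..tk k''}"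
    using kk by simp
  have "(g has_integral (\<Sum>k\<in>{k'..<k''}. (tk (Suc k) - tk k) * c k)) {tk k'..<tk k''}"
  proof (subst has_integral_spike_set_eq)
    show "negligible {x \<in> {tk k'..<tk k''} - {tk k'..tk k''}. g x \<noteq> 0}"
      by (rule negligible_subset[of "{}"]) auto
    show "negligible {x \<in> {tk k'..tk k''} - {tk k'..<tk k''}. g x \<noteq> 0}"
      by (rule negligible_subset[of "{tk k''}"]) auto
  qed (rule I)
  then show ?thesis by (rule integral_unique)
qed

lemma trans_props:
  fixes Lk :: "nat \<Rightarrow> real mat" and tk :: "nat \<Rightarrow> real"
  assumes Lc: "\<And>k. Lk k \<in> carrier_mat N N" and Ls: "\<And>k. (Lk k)\<^sup>T = Lk k"
    and Lp: "\<And>k x. x \<in> carrier_vec N \<Longrightarrow> 0 \<le> x \<bullet> (Lk k *\<^sub>v x)"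
    and dt: "\<And>k. tk k < tk (Suc k)"
  shows "trans_mat N Lk tk k0 j \<in> carrier_mat N N \<and>
     (\<forall>x::real vec\<in>carrier_vec N. (trans_mat N Lk tk k0 j *\<^sub>v x) \<bullet> (trans_mat N Lk tk k0 j *\<^sub>v x) \<le> x \<bullet> x \<and>
        ((trans_mat N Lk tk k0 j *\<^sub>v x) \<bullet> (trans_mat N Lk tk k0 j *\<^sub>v x) = x \<bullet> x \<longrightarrow>
           trans_mat N Lk tk k0 j *\<^sub>v x = x \<and> (\<forall>k<j. Lk (k0+k) *\<^sub>v x = 0\<^sub>v N)))"
proof (induction j)
  case 0
  then show ?case by simp
next
  case (Suc j)
  define s where "s = tk (Suc (k0 + j)) - tk (k0 + j)"
  have s: "s > 0" using dt[of "k0+j"] by (simp add: s_def)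
  define E where "E = mat_exp (- (s \<cdot>\<^sub>m Lk (k0+j)))"
  define Phi where "Phi = trans_mat N Lk tk k0 j"
  have Ec: "E \<in> carrier_mat N N" unfolding E_def by (rule exp_contract(1)[OF Lc Ls Lp s])
  have Ele: "(E *\<^sub>v y) \<bullet> (E *\<^sub>v y) \<le> y \<bullet> y" if "y \<in> carrier_vec N" for y
    unfolding E_def by (rule exp_contract(2)[OF Lc Ls Lp s that])
  have Eeq: "Lk (k0+j) *\<^sub>v y = 0\<^sub>v N \<and> E *\<^sub>v y = y" if "y \<in> carrier_vec N" "(E *\<^sub>v y) \<bullet> (E *\<^sub>v y) = y \<bullet> y" for y
    using exp_contract(3)[OF Lc Ls Lp s that(1)] that(2) unfolding E_def by blast
  have Pc: "Phi \<in> carrier_mat N N" and Ple: "\<And>x::real vec. x \<in> carrier_vec N \<Longrightarrow> (Phi *\<^sub>v x) \<bullet> (Phi *\<^sub>v x) \<le> x \<bullet> x"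
    and Peq: "\<And>x::real vec. x \<in> carrier_vec N \<Longrightarrow> (Phi *\<^sub>v x) \<bullet> (Phi *\<^sub>v x) = x \<bullet> x \<Longrightarrow> Phi *\<^sub>v x = x \<and> (\<forall>k<j. Lk (k0+k) *\<^sub>v x = 0\<^sub>v N)"
    using Suc.IH unfolding Phi_def by auto
  have T: "trans_mat N Lk tk k0 (Suc j) = E * Phi" by (simp add: E_def Phi_def s_def)
  have TE: "(E * Phi) *\<^sub>v x = E *\<^sub>v (Phi *\<^sub>v x)" if "x \<in> carrier_vec N" for x
    using Ec Pc that by simp
  show ?case unfolding T
  proof (intro conjI ballI impI)
    show "E * Phi \<in> carrier_mat N N" using Ec Pc by simp
    fix x :: "real vec" assume x: "x \<in> carrier_vec N"
    have y: "Phi *\<^sub>v x \<in> carrier_vec N" using Pc x by simp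
    have le1: "(E *\<^sub>v (Phi *\<^sub>v x)) \<bullet> (E *\<^sub>v (Phi *\<^sub>v x)) \<le> (Phi *\<^sub>v x) \<bullet> (Phi *\<^sub>v x)" by (rule Ele[OF y])
    have le2: "(Phi *\<^sub>v x) \<bullet> (Phi *\<^sub>v x) \<le> x \<bullet> x" by (rule Ple[OF x])
    show "((E * Phi) *\<^sub>v x) \<bullet> ((E * Phi) *\<^sub>v x) \<le> x \<bullet> x" unfolding TE[OF x] using le1 le2 by linarith
    assume eq: "((E * Phi) *\<^sub>v x) \<bullet> ((E * Phi) *\<^sub>v x) = x \<bullet> x"
    then have eq2: "(Phi *\<^sub>v x) \<bullet> (Phi *\<^sub>v x) = x \<bullet> x" unfolding TE[OF x] using le1 le2 by linarith
    from Peq[OF x eq2] have Px: "Phi *\<^sub>v x = x" and Lx: "\<forall>k<j. Lk (k0+k) *\<^sub>v x = 0\<^sub>v N" by auto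
    have "(E *\<^sub>v x) \<bullet> (E *\<^sub>v x) = x \<bullet> x" using eq unfolding TE[OF x] Px .
    from Eeq[OF x this] have L0: "Lk (k0+j) *\<^sub>v x = 0\<^sub>v N" and Ex: "E *\<^sub>v x = x" by auto
    show "(E * Phi) *\<^sub>v x = x" unfolding TE[OF x] Px Ex ..
    show "\<forall>k<Suc j. Lk (k0+k) *\<^sub>v x = 0\<^sub>v N" using Lx L0 by (auto simp: less_Suc_eq)
  qed
qed

lemma kernel_card_le:
  fixes A :: "real mat"
  assumes A: "A \<in> carrier_mat N N" and B: "B \<subseteq> mat_kernel A" and Bc: "B \<subseteq> carrier_vec N"
    and orth: "\<And>u v :: real vec. u \<in> B \<Longrightarrow> v \<in> B \<Longrightarrow> u \<bullet> v = (if u = v then 1 else 0)"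
  shows "card B \<le> kernel_dim A"
proof -
  interpret K: kernel N N A by unfold_locales (rule A)
  have "\<not> K.NC.lin_dep B"
  proof
    assume "K.NC.lin_dep B"
    then obtain U a v where U: "finite U" "U \<subseteq> B" and lc: "K.NC.lincomb a U = 0\<^sub>v N"
      and v: "v \<in> U" "a v \<noteq> 0"
      unfolding K.NC.lin_dep_def by auto
    have Uc: "U \<subseteq> carrier_vec N" using U Bc by auto
    have vc: "v \<in> carrier_vec N" using v Uc by auto
    have dimlc: "dim_vec (K.NC.lincomb a U) = N" using lc by (metis index_zero_vec(2))
    have "v \<bullet> K.NC.lincomb a U = (\<Sum>i\<in>{0..<N}. v $ i * K.NC.lincomb a U $ i)"
      unfolding scalar_prod_def dimlc ..
    also have "\<dots> = (\<Sum>i\<in>{0..<N}. v $ i * (\<Sum>u\<in>U. a u * u $ i))"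
      by (intro sum.cong refl) (simp add: K.NC.lincomb_index[OF _ Uc])
    also have "\<dots> = (\<Sum>u\<in>U. a u * (\<Sum>i\<in>{0..<N}. v $ i * u $ i))"
      by (simp add: sum_distrib_left mult_ac sum.swap[of _ U])
    also have "\<dots> = (\<Sum>u\<in>U. a u * (v \<bullet> u))"
      by (intro sum.cong refl) (use Uc in \<open>auto simp: scalar_prod_def\<close>)
    also have "\<dots> = (\<Sum>u\<in>U. if u = v then a u else 0)"
    proof (intro sum.cong refl)
      fix u assume "u \<in> U"
      then have "u \<in> B" "v \<in> B" using U(2) v(1) by auto
      then have "v \<bullet> u = (if v = u then 1 else 0)" by (rule orth[of v u, rotated])
      then show "a u * (v \<bullet> u) = (if u = v then a u else 0)" by auto
    qed
    also have "\<dots> = a v" using U v by simp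
    finally have "v \<bullet> K.NC.lincomb a U = a v" .
    moreover have "v \<bullet> K.NC.lincomb a U = 0" using lc vc by simp
    ultimately show False using v by simp
  qed
  then have li: "K.lin_indpt B" using K.lindep_same[OF B] by simp
  obtain B0 where "finite B0" "kernel.basis N A B0" using kernel_basis_exists[OF A] by auto
  then have fd: "K.Ker.fin_dim" unfolding K.Ker.fin_dim_def K.Ker.basis_def by auto
  have "card B \<le> K.dim" using K.Ker.li_le_dim(2)[OF fd _ li] B by simp
  then show ?thesis by simp
qed

lemma final_list:
  fixes mu :: "real list"
  assumes len: "length mu = N" and mN: "m < N" and le1: "\<forall>x\<in>set mu. x \<le> 1"
    and cnt: "card {l. l < N \<and> mu ! l = 1} \<le> m"
  shows "rev (sort mu) ! m < 1"
proof (rule ccontr)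
  define ev where "ev = rev (sort mu)"
  assume "\<not> rev (sort mu) ! m < 1"
  then have evm: "ev ! m \<ge> 1" unfolding ev_def by simp
  have lev: "length ev = N" using len by (simp add: ev_def)
  have mono: "ev ! j \<le> ev ! i" if "i \<le> j" "j < N" for i j
  proof -
    have "ev ! i = sort mu ! (N - 1 - i)" "ev ! j = sort mu ! (N - 1 - j)"
      using that len by (simp_all add: ev_def rev_nth)
    moreover have "sort mu ! (N - 1 - j) \<le> sort mu ! (N - 1 - i)"
      by (rule sorted_nth_mono) (use that len in auto)
    ultimately show ?thesis by simp
  qed
  have setev: "set ev = set mu" by (simp add: ev_def)
  have ev1: "ev ! i = 1" if "i \<le> m" for i
  proof -
    have "ev ! i \<ge> 1" using mono[OF that] mN evm by fastforce
    moreover have "ev ! i \<in> set mu" using that mN lev setev by (metis le_less_trans nth_mem)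
    ultimately show ?thesis using le1 by fastforce
  qed
  have "card {i. i < N \<and> ev ! i = 1} \<ge> card {0..m}"
    by (rule card_mono) (use ev1 mN in auto)
  then have c1: "card {i. i < N \<and> ev ! i = 1} \<ge> Suc m" by simp
  have gen: "count (mset xs) x = card {i. i < length xs \<and> xs ! i = x}" for xs :: "real list" and x
    unfolding count_mset count_list_eq_length_filter length_filter_conv_card
    by (rule arg_cong[where f = card]) auto
  have "count (mset ev) 1 = card {i. i < N \<and> ev ! i = 1}" using gen[of ev 1] lev by simp
  moreover have "count (mset mu) 1 = card {l. l < N \<and> mu ! l = 1}" using gen[of mu 1] len by simp
  moreover have "mset ev = mset mu" by (simp add: ev_def)
  ultimately show False using c1 cnt by simp
qed

lemma proots_linear_prod: "proots (\<Prod>a\<leftarrow>mu. [:- a, 1:]) = mset (mu :: real list)"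
proof (induction mu)
  case Nil
  then show ?case by simp
next
  case (Cons a mu)
  have nz: "(\<Prod>a\<leftarrow>mu. [:- a, 1:]) \<noteq> (0 :: real poly)"
    by (auto simp: prod_list_zero_iff)
  have "(\<Prod>a\<leftarrow>a # mu. [:- a, 1:]) = [:- a, 1:] * (\<Prod>a\<leftarrow>mu. [:- a, 1:])"
    by (simp only: list.map prod_list.Cons)
  also have "proots \<dots> = proots [:- a, 1:] + proots (\<Prod>a\<leftarrow>mu. [:- a, 1:])"
    by (rule proots_mult) (use nz in auto)
  also have "proots [:- a, 1:] = {#a#}" using proots_linear_factor[of "- a"] by simp
  finally show ?case using Cons by simp
qed

lemma orth_inner:
  assumes V: "orth_mat N V" and a: "a \<in> carrier_vec N" and b: "b \<in> carrier_vec N"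
  shows "(V *\<^sub>v a) \<bullet> (V *\<^sub>v b) = a \<bullet> (b :: real vec)"
proof -
  have Vc: "V \<in> carrier_mat N N" using V orth_mat_def by auto
  have "(V\<^sup>T *\<^sub>v (V *\<^sub>v a)) \<bullet> b = (V *\<^sub>v a) \<bullet> (V *\<^sub>v b)"
    by (rule transpose_vec_mult_scalar[OF Vc b]) (use Vc a in simp)
  then show ?thesis using orth_back(2)[OF V a] by simp
qed

lemma eig_facts:
  assumes V: "orth_mat N V" and lmu: "length mu = N" and l: "l < N"
  shows "(V * diagm mu * V\<^sup>T) *\<^sub>v (V *\<^sub>v unit_vec N l) = mu ! l \<cdot>\<^sub>v (V *\<^sub>v unit_vec N l)"
    and "(V *\<^sub>v unit_vec N l) \<bullet> (V *\<^sub>v unit_vec N l) = 1"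
proof -
  have Vc: "V \<in> carrier_mat N N" using V orth_mat_def by auto
  have e: "unit_vec N l \<in> carrier_vec N" by simp
  have D: "diagm mu *\<^sub>v unit_vec N l = mu ! l \<cdot>\<^sub>v unit_vec N l"
    using lmu l by (intro eq_vecI) (auto simp: diagm_mult_vec)
  have "(V * diagm mu * V\<^sup>T) *\<^sub>v (V *\<^sub>v unit_vec N l) = V *\<^sub>v (diagm mu *\<^sub>v (V\<^sup>T *\<^sub>v (V *\<^sub>v unit_vec N l)))"
    by (rule UDUt_mult_vec[OF Vc lmu]) (use Vc in simp)
  also have "\<dots> = V *\<^sub>v (mu ! l \<cdot>\<^sub>v unit_vec N l)" unfolding orth_back(2)[OF V e] D ..
  also have "\<dots> = mu ! l \<cdot>\<^sub>v (V *\<^sub>v unit_vec N l)" by (rule mult_mat_vec[OF Vc e])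
  finally show "(V * diagm mu * V\<^sup>T) *\<^sub>v (V *\<^sub>v unit_vec N l) = mu ! l \<cdot>\<^sub>v (V *\<^sub>v unit_vec N l)" .
  show "(V *\<^sub>v unit_vec N l) \<bullet> (V *\<^sub>v unit_vec N l) = 1"
    using orth_inner[OF V e e] l by simp
qed

theorem lemma10:
  fixes n d :: nat
    and W :: "real \<Rightarrow> nat \<Rightarrow> nat \<Rightarrow> real mat"
    and tk :: "nat \<Rightarrow> real"
    and \<alpha> :: real
    and k' k'' :: nat
  assumes n_gt: "n > 1" and d_pos: "d > 0"
    and W_carrier: "\<And>t i j. i < n \<Longrightarrow> j < n \<Longrightarrow> W t i j \<in> carrier_mat d d"
    and W_sym_mat: "\<And>t i j. i < n \<Longrightarrow> j < n \<Longrightarrow> (W t i j)\<^sup>T = W t i j"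
    and W_sym: "\<And>t i j. i < n \<Longrightarrow> j < n \<Longrightarrow> W t i j = W t j i"
    and W_diag: "\<And>t i. i < n \<Longrightarrow> W t i i = 0\<^sub>m d d"
    and W_sign: "\<And>i j. i < n \<Longrightarrow> j < n \<Longrightarrow>
                    (\<forall>t. psd_mat d (W t i j)) \<or> (\<forall>t. nsd_mat d (W t i j))"
    and t0: "tk 0 = 0"
    and t_inf: "filterlim tk at_top sequentially"
    and alpha_pos: "\<alpha> > 0"
    and dwell: "\<And>k. tk (Suc k) - tk k \<ge> \<alpha>"
    and piecewise_const: "\<And>k t. tk k \<le> t \<Longrightarrow> t < tk (Suc k) \<Longrightarrow> W t = W (tk k)"
    and kk: "k' < k''"
    and m_lt: "kernel_dim (mat (d * n) (d * n) (\<lambda>(p, q).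
                 integral {tk k'..<tk k''} (\<lambda>t. mw_laplacian d n (W t) $$ (p, q))
                 / (tk k'' - tk k'))) < d * n"
  shows "(let Phi = trans_mat (d * n) (\<lambda>k. mw_laplacian d n (W (tk k))) tk k' (k'' - k');
              m = kernel_dim (mat (d * n) (d * n) (\<lambda>(p, q).
                 integral {tk k'..<tk k''} (\<lambda>t. mw_laplacian d n (W t) $$ (p, q))
                 / (tk k'' - tk k')))
          in eigs_desc (Phi\<^sup>T * Phi) ! m < 1)"
proof -
  define Lk where "Lk = (\<lambda>k. mw_laplacian d n (W (tk k)))"
  define Lbar where "Lbar = mat (d * n) (d * n) (\<lambda>(p, q).
                 integral {tk k'..<tk k''} (\<lambda>t. mw_laplacian d n (W t) $$ (p, q))
                 / (tk k'' - tk k'))"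
  define m where "m = kernel_dim Lbar"
  define Phi where "Phi = trans_mat (d * n) Lk tk k' (k'' - k')"
  have mN: "m < d * n" using m_lt unfolding m_def Lbar_def .
  have dt: "tk k < tk (Suc k)" for k using dwell[of k] alpha_pos by linarith
  have LkC: "Lk k \<in> carrier_mat (d*n) (d*n)" for k by (simp add: Lk_def)
  have LkS: "(Lk k)\<^sup>T = Lk k" for k
    unfolding Lk_def by (rule lap_sym) (auto intro: W_carrier W_sym_mat W_sym)
  have LkP: "0 \<le> x \<bullet> (Lk k *\<^sub>v x)" if "x \<in> carrier_vec (d*n)" for k x
    unfolding Lk_def
  proof (rule lap_psd[OF d_pos that])
    show "psd_mat d (W (tk k) i j) \<or> nsd_mat d (W (tk k) i j)" if "i < n" "j < n" for i j
      using W_sign[OF that] by blast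
  qed (auto intro: W_carrier W_sym_mat W_sym)
  note TP = trans_props[of Lk "d*n" tk k' "k'' - k'", OF LkC LkS LkP dt]
  have PhiC: "Phi \<in> carrier_mat (d*n) (d*n)" using TP unfolding Phi_def by blast
  have Phile: "(Phi *\<^sub>v x) \<bullet> (Phi *\<^sub>v x) \<le> x \<bullet> x" if "x \<in> carrier_vec (d*n)" for x
    using TP that unfolding Phi_def by blast
  have Phieq: "\<forall>k<k'' - k'. Lk (k'+k) *\<^sub>v x = 0\<^sub>v (d*n)"
    if "x \<in> carrier_vec (d*n)" "(Phi *\<^sub>v x) \<bullet> (Phi *\<^sub>v x) = x \<bullet> x" for x
    using TP that unfolding Phi_def by blast
  have LbarC: "Lbar \<in> carrier_mat (d*n) (d*n)" by (simp add: Lbar_def)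
  have integ: "integral {tk k'..<tk k''} (\<lambda>t. mw_laplacian d n (W t) $$ (p, q))
      = (\<Sum>k\<in>{k'..<k''}. (tk (Suc k) - tk k) * Lk k $$ (p,q))" for p q
  proof (rule pw_integral_ho)
    show "tk k \<le> tk (Suc k)" for k using dt[of k] by simp
    show "mw_laplacian d n (W t) $$ (p, q) = Lk k $$ (p,q)" if "tk k \<le> t" "t < tk (Suc k)" for k t
      using piecewise_const[OF that] by (simp add: Lk_def)
  qed (use kk in simp)
  have Lbar0: "Lbar *\<^sub>v x = 0\<^sub>v (d*n)"
    if x: "x \<in> carrier_vec (d*n)" and L0: "\<forall>k<k'' - k'. Lk (k'+k) *\<^sub>v x = 0\<^sub>v (d*n)" for x
  proof (rule eq_vecI)
    fix p assume "p < dim_vec (0\<^sub>v (d*n) :: real vec)"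
    then have p: "p < d*n" by simp
    have Lkx: "(\<Sum>q\<in>{0..<d*n}. Lk k $$ (p,q) * x $ q) = 0" if "k \<in> {k'..<k''}" for k
    proof -
      have "k'+(k-k') = k" using that by simp
      then have "Lk k *\<^sub>v x = 0\<^sub>v (d*n)" using L0 that by (metis atLeastLessThan_iff diff_less_mono)
      then have "(Lk k *\<^sub>v x) $ p = 0" using p by simp
      then show ?thesis using mult_mat_vec_index_sum[OF LkC x p] by simp
    qed
    have "(Lbar *\<^sub>v x) $ p = (\<Sum>q\<in>{0..<d*n}. Lbar $$ (p,q) * x $ q)"
      by (rule mult_mat_vec_index_sum[OF LbarC x p])
    also have "\<dots> = (\<Sum>q\<in>{0..<d*n}. (\<Sum>k\<in>{k'..<k''}. (tk (Suc k) - tk k) * Lk k $$ (p,q)) / (tk k'' - tk k') * x $ q)"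
      by (intro sum.cong refl) (use p in \<open>simp add: Lbar_def integ\<close>)
    also have "\<dots> = (\<Sum>k\<in>{k'..<k''}. (tk (Suc k) - tk k) / (tk k'' - tk k') * (\<Sum>q\<in>{0..<d*n}. Lk k $$ (p,q) * x $ q))"
      by (simp add: sum_divide_distrib sum_distrib_left sum_distrib_right sum.swap[of _ "{0..<d*n}"] mult_ac)
    also have "\<dots> = 0" using Lkx by simp
    finally show "(Lbar *\<^sub>v x) $ p = 0\<^sub>v (d*n) $ p" using p by simp
  qed (use LbarC in simp)
  define P where "P = Phi\<^sup>T * Phi"
  have PC: "P \<in> carrier_mat (d*n) (d*n)" using PhiC by (simp add: P_def)
  have PS: "P\<^sup>T = P" unfolding P_def using transpose_mult[of "Phi\<^sup>T" "d*n" "d*n" Phi "d*n"] PhiC by simp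
  obtain V mu where V: "orth_mat (d*n) V" and lmu: "length mu = d*n" and Peq: "P = V * diagm mu * V\<^sup>T"
    using spectral[OF PC PS] by auto
  have VC: "V \<in> carrier_mat (d*n) (d*n)" and VVt: "V * V\<^sup>T = 1\<^sub>m (d*n)" and VtV: "V\<^sup>T * V = 1\<^sub>m (d*n)"
    using V orth_mat_def by auto
  have DC: "diagm mu \<in> carrier_mat (d*n) (d*n)" using lmu by (metis diagm_carrier)
  have "similar_mat P (diagm mu)"
    unfolding similar_mat_def similar_mat_wit_def Let_def
    by (intro exI[of _ V] exI[of _ "V\<^sup>T"]) (use PC DC VC VVt VtV Peq in auto)
  then have "char_poly P = char_poly (diagm mu)" by (rule char_poly_similar)
  also have "\<dots> = (\<Prod>a\<leftarrow>diag_mat (diagm mu). [:- a, 1:])"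
    by (rule char_poly_upper_triangular[OF DC]) (auto simp: upper_triangular_def diagm_def)
  also have "diag_mat (diagm mu) = mu"
    by (rule nth_equalityI) (auto simp: diag_mat_def diagm_def)
  finally have cp: "char_poly P = (\<Prod>a\<leftarrow>mu. [:- a, 1:])" .
  have eigs: "eigs_desc P = rev (sort mu)"
    unfolding eigs_desc_def cp proots_linear_prod by simp
  define ev where "ev = (\<lambda>l. V *\<^sub>v unit_vec (d*n) l)"
  have evC: "ev l \<in> carrier_vec (d*n)" for l using VC by (simp add: ev_def)
  have mu_norm: "mu ! l = (Phi *\<^sub>v ev l) \<bullet> (Phi *\<^sub>v ev l)" and evn: "ev l \<bullet> ev l = 1" if l: "l < d*n" for l
  proof -
    have Pe: "P *\<^sub>v ev l = mu ! l \<cdot>\<^sub>v ev l" unfolding Peq ev_def by (rule eig_facts(1)[OF V lmu l])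
    show n1: "ev l \<bullet> ev l = 1" unfolding ev_def by (rule eig_facts(2)[OF V lmu l])
    have "ev l \<bullet> (P *\<^sub>v ev l) = mu ! l" unfolding Pe using evC[of l] n1 by simp
    moreover have "ev l \<bullet> (P *\<^sub>v ev l) = (Phi *\<^sub>v ev l) \<bullet> (Phi *\<^sub>v ev l)"
    proof -
      have "P *\<^sub>v ev l = Phi\<^sup>T *\<^sub>v (Phi *\<^sub>v ev l)" unfolding P_def using PhiC evC[of l] by simp
      moreover have "(Phi\<^sup>T *\<^sub>v (Phi *\<^sub>v ev l)) \<bullet> ev l = (Phi *\<^sub>v ev l) \<bullet> (Phi *\<^sub>v ev l)"
        by (rule transpose_vec_mult_scalar[OF PhiC evC]) (use PhiC evC[of l] in simp)
      moreover have "ev l \<bullet> (Phi\<^sup>T *\<^sub>v (Phi *\<^sub>v ev l)) = (Phi\<^sup>T *\<^sub>v (Phi *\<^sub>v ev l)) \<bullet> ev l"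
        by (rule comm_scalar_prod[of _ "d*n"]) (use PhiC evC[of l] in simp_all)
      ultimately show ?thesis by simp
    qed
    ultimately show "mu ! l = (Phi *\<^sub>v ev l) \<bullet> (Phi *\<^sub>v ev l)" by simp
  qed
  have le1: "\<forall>x\<in>set mu. x \<le> 1"
  proof
    fix x assume "x \<in> set mu"
    then obtain l where l: "l < d*n" "x = mu ! l" using lmu by (metis in_set_conv_nth)
    show "x \<le> 1" using mu_norm[OF l(1)] evn[OF l(1)] Phile[OF evC[of l]] l(2) by simp
  qed
  define S where "S = {l. l < d*n \<and> mu ! l = 1}"
  have inj: "inj_on ev S"
  proof (rule inj_onI)
    fix l l' assume "l \<in> S" "l' \<in> S" and eq: "ev l = ev l'"
    then have ll: "l < d*n" "l' < d*n" by (auto simp: S_def)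
    have u1: "unit_vec (d*n) l = V\<^sup>T *\<^sub>v ev l" unfolding ev_def using orth_back(2)[OF V] by simp
    have u2: "unit_vec (d*n) l' = V\<^sup>T *\<^sub>v ev l'" unfolding ev_def using orth_back(2)[OF V] by simp
    have "unit_vec (d*n) l = V\<^sup>T *\<^sub>v ev l" by (rule u1)
    also have "\<dots> = V\<^sup>T *\<^sub>v ev l'" using eq by simp
    also have "\<dots> = unit_vec (d*n) l'" by (rule u2[symmetric])
    finally have "(unit_vec (d*n) l :: real vec) = unit_vec (d*n) l'" .
    then have "(unit_vec (d*n) l :: real vec) $ l = unit_vec (d*n) l' $ l" by simp
    then show "l = l'" using ll by (auto split: if_splits)
  qed
  have B_ker: "ev ` S \<subseteq> mat_kernel Lbar"
  proof
    fix v assume "v \<in> ev ` S"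
    then obtain l where l: "l \<in> S" "v = ev l" by auto
    then have lN: "l < d*n" and mu1: "mu ! l = 1" by (auto simp: S_def)
    have "(Phi *\<^sub>v ev l) \<bullet> (Phi *\<^sub>v ev l) = ev l \<bullet> ev l" using mu_norm[OF lN] evn[OF lN] mu1 by simp
    then have "Lbar *\<^sub>v ev l = 0\<^sub>v (d*n)" using Lbar0[OF evC Phieq[OF evC]] by simp
    then have "ev l \<in> mat_kernel Lbar" by (rule mat_kernelI[OF LbarC evC])
    then show "v \<in> mat_kernel Lbar" using l(2) by simp
  qed
  have B_orth: "u \<bullet> v = (if u = v then 1 else 0)" if uS: "u \<in> ev ` S" and vS: "v \<in> ev ` S" for u v :: "real vec"
  proof -
    obtain l where l: "l \<in> S" "u = ev l" using uS by blast
    obtain l' where l': "l' \<in> S" "v = ev l'" using vS by blast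
    have ll: "l < d*n" "l' < d*n" using l l' by (auto simp: S_def)
    have "u \<bullet> v = unit_vec (d*n) l \<bullet> unit_vec (d*n) l'"
      unfolding l l' ev_def by (rule orth_inner[OF V]) auto
    also have "\<dots> = (if l = l' then 1 else 0)" using ll by simp
    also have "(l = l') = (u = v)" using inj l l' by (auto dest: inj_onD)
    finally show ?thesis .
  qed
  have "card (ev ` S) \<le> kernel_dim Lbar"
    by (rule kernel_card_le[OF LbarC B_ker _ B_orth]) (use evC in auto)
  then have cnt: "card S \<le> m" using card_image[OF inj] unfolding m_def by simp
  have "rev (sort mu) ! m < 1"
    by (rule final_list[OF lmu mN le1]) (use cnt in \<open>simp add: S_def\<close>)
  then have "eigs_desc (Phi\<^sup>T * Phi) ! m < 1" using eigs unfolding P_def by simp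
  then show ?thesis unfolding Let_def Phi_def Lk_def m_def Lbar_def .
qed

end
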